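(* The functor $\Gamma_G\colon\mathcal R_G\to N^*\mathcal L_G$ defined by $\Gamma_G(\overrightarrow e)=H(r^e;-)$ and $\Gamma_G(l(e,u,f))=\eta_{r^e}\,\mathcal L_G(r(f,u,e),-)\,\eta_{r^f}^{-1}$ is a local isomorphism.
   Context: Let $S$ be a regular semigroup, $E=E(S)$, $e\,\omega^l f$ iff $ef=e$, $e\,\omega^r f$ iff $fe=e$; $L_a$ is the $\mathscr L$-class of $a$, $E(L_a)=E\cap L_a$. $\mathcal L_G$: objects $E/\mathscr L$ (classes $\overleftarrow e$); morphisms $\overleftarrow e\to\overleftarrow f$ the classes $r(e,u,f)$, $u\in eSf$, under $(e,u,f)\sim(g,v,h)$ iff $e\mathscr L g$, $f\mathscr L h$, $u=ev$; composition $r(e,u,f)r(f,v,g)=r(e,uv,g)$; inclusions $r(e,e,f)$ for $e\,\omega^l f$. $\mathcal R_G$: objects $E/\mathscr R$ (classes $\overrightarrow e$); morphisms $\overrightarrow e\to\overrightarrow f$ the classes $l(e,u,f)$, $u\in fSe$, under $(e,u,f)\sim(g,v,h)$ iff $e\mathscr R g$, $f\mathscr R h$, $u=ve$; composition $l(e,u,f)l(f,v,g)=l(e,vu,g)$; inclusions $l(e,e,f)$ for $e\,\omega^r f$. Both are normal categories; composition is written left to right. A normal cone $\gamma$ in a normal category $\mathcal C$ with apex $c_\gamma$ is a map assigning to each object $c$ a morphism $\gamma(c)\colon c\to c_\gamma$ compatible with inclusions and with at least one isomorphism component. Every morphism $f$ of $\mathcal C$ has a normal factorization $f=quj$ (retraction,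 isomorphism, inclusion) and $f^\circ:=qu$ is its epimorphic component (in $\mathcal L_G$, $r(e,y,f)^\circ=r(e,y,h)$ for $h\in E(L_y)$). For a normal cone $\gamma$ and an epimorphism $h\colon c_\gamma\to d$, $\gamma\ast h$ is the normal cone $c\mapsto\gamma(c)h$. For a normal cone $\gamma$, the H-functor $H(\gamma;-)\colon\mathcal C\to\mathbf{Set}$ is $H(\gamma;c)=\{\gamma\ast f^\circ: f\in\mathcal C(c_\gamma,c)\}$, $H(\gamma;g)\colon\gamma\ast f^\circ\mapsto\gamma\ast(fg)^\circ$; $\eta_\gamma\colon H(\gamma;-)\to\mathcal C(c_\gamma,-)$ is the natural isomorphism with components $\gamma\ast f^\circ\mapsto f$. The normal dual $N^*\mathcal C$ is the full subcategory of the functor category $[\mathcal C,\mathbf{Set}]$ whose objects are the H-functors; its inclusions are the natural transformations $H(\gamma;-)\to H(\gamma';-)$ all of whose components are set inclusions. For a morphism $k\colon c\to c'$ of $\mathcal C$, $\mathcal C(k,-)\colon\mathcal C(c',-)\to\mathcal C(c,-)$ is the natural transformation $h\mapsto kh$. For $e\in E$, $r^e$ is the normal cone in $\mathcal L_G$ with apex $\overleftarrow e$, $r^e(\overleftarrow g)=r(g,ge,e)$. For an object $c$ of a category with subobjects, the ideal $\langle c\rangle$ is the full subcategory on objects $d\subseteq c$. A functor $F$ between categories with subobjects is a local isomorphism if it is inclusion preserving, fully faithful, and for each object $c$ its restriction to $\langle c\rangle$ is an isomorphism onto $\langle F(c)\rangle$. *)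

theory Defs
  imports Main "HOL-Library.FuncSet"
begin

definition regular_semigroup :: "'a::semigroup_mult itself \<Rightarrow> bool" where
  "regular_semigroup _ \<longleftrightarrow> (\<forall>a::'a. \<exists>x. a * x * a = a)"

definition Eset :: "'a::semigroup_mult set" where
  "Eset = {e. e * e = e}"

text \<open>Green's relations in S (without adjoining an identity: S^1 a = S^1 b, a S^1 = b S^1).\<close>
definition Lrel :: "'a::semigroup_mult \<Rightarrow> 'a \<Rightarrow> bool" where
  "Lrel a b \<longleftrightarrow> (b = a \<or> (\<exists>x. b = x * a)) \<and> (a = b \<or> (\<exists>y. a = y * b))"

definition Rrel :: "'a::semigroup_mult \<Rightarrow> 'a \<Rightarrow> bool" where
  "Rrel a b \<longleftrightarrow> (b = a \<or> (\<exists>x. b = a * x)) \<and> (a = b \<or> (\<exists>y. a = b * y))"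

type_synonym 'a Lmor = "('a \<times> 'a \<times> 'a) set"
type_synonym 'a cone = "'a set \<Rightarrow> 'a Lmor"

definition Lcls :: "'a::semigroup_mult \<Rightarrow> 'a set" where
  "Lcls e = {g \<in> Eset. Lrel g e}"

definition Lobj :: "'a::semigroup_mult set set" where
  "Lobj = Lcls ` Eset"

definition Ltrip :: "('a::semigroup_mult \<times> 'a \<times> 'a) set" where
  "Ltrip = {(e, u, f). e \<in> Eset \<and> f \<in> Eset \<and> (\<exists>s. u = e * s * f)}"

definition rmor :: "'a::semigroup_mult \<Rightarrow> 'a \<Rightarrow> 'a \<Rightarrow> 'a Lmor" where
  "rmor e u f = {(g, v, h). (g, v, h) \<in> Ltrip \<and> Lrel e g \<and> Lrel f h \<and> u = e * v}"

definition Lhom :: "'a::semigroup_mult set \<Rightarrow> 'a set \<Rightarrow> 'a Lmor set" where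
  "Lhom c d = {rmor e u f | e u f. (e, u, f) \<in> Ltrip \<and> Lcls e = c \<and> Lcls f = d}"

definition Ldom :: "'a::semigroup_mult Lmor \<Rightarrow> 'a set" where
  "Ldom m = (SOME c. \<exists>d. c \<in> Lobj \<and> d \<in> Lobj \<and> m \<in> Lhom c d)"

definition Lcod :: "'a::semigroup_mult Lmor \<Rightarrow> 'a set" where
  "Lcod m = (SOME d. \<exists>c. c \<in> Lobj \<and> d \<in> Lobj \<and> m \<in> Lhom c d)"

text \<open>composition (left to right): r(e,u,f) r(f,v,g) = r(e,uv,g)\<close>
definition Lcomp :: "'a::semigroup_mult Lmor \<Rightarrow> 'a Lmor \<Rightarrow> 'a Lmor" where
  "Lcomp m n = (SOME k. \<exists>e u f v g. (e, u, f) \<in> Ltrip \<and> (f, v, g) \<in> Ltrip \<and>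
      m = rmor e u f \<and> n = rmor f v g \<and> k = rmor e (u * v) g)"

definition Lid :: "'a::semigroup_mult set \<Rightarrow> 'a Lmor" where
  "Lid c = (SOME k. \<exists>e \<in> Eset. c = Lcls e \<and> k = rmor e e e)"

definition Liso :: "'a::semigroup_mult Lmor \<Rightarrow> bool" where
  "Liso m \<longleftrightarrow> (\<exists>c \<in> Lobj. \<exists>d \<in> Lobj. m \<in> Lhom c d \<and>
      (\<exists>n \<in> Lhom d c. Lcomp m n = Lid c \<and> Lcomp n m = Lid d))"

text \<open>subobject relation: c \<subseteq> d iff there is an inclusion r(e,e,f) with e omega^l f\<close>
definition Lsub :: "'a::semigroup_mult set \<Rightarrow> 'a set \<Rightarrow> bool" where
  "Lsub c d \<longleftrightarrow> (\<exists>e \<in> Eset. \<exists>f \<in> Eset. c = Lcls e \<and> d = Lcls f \<and> e * f = e)"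

definition Lincl :: "'a::semigroup_mult set \<Rightarrow> 'a set \<Rightarrow> 'a Lmor" where
  "Lincl c d = (SOME m. \<exists>e \<in> Eset. \<exists>f \<in> Eset. c = Lcls e \<and> d = Lcls f \<and> e * f = e
      \<and> m = rmor e e f)"

definition Lepi :: "'a::semigroup_mult Lmor \<Rightarrow> 'a Lmor" where
  "Lepi m = (SOME k. \<exists>e y f h. (e, y, f) \<in> Ltrip \<and> m = rmor e y f \<and> h \<in> Eset \<and> Lrel h y
      \<and> k = rmor e y h)"

definition normal_cone :: "'a::semigroup_mult cone \<Rightarrow> 'a set \<Rightarrow> bool" where
  "normal_cone \<gamma> d \<longleftrightarrow> d \<in> Lobj \<and> \<gamma> \<in> extensional Lobj \<and>
     (\<forall>c \<in> Lobj. \<gamma> c \<in> Lhom c d) \<and>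
     (\<forall>c \<in> Lobj. \<forall>c' \<in> Lobj. Lsub c c' \<longrightarrow> Lcomp (Lincl c c') (\<gamma> c') = \<gamma> c) \<and>
     (\<exists>c \<in> Lobj. Liso (\<gamma> c))"

definition is_normal_cone :: "'a::semigroup_mult cone \<Rightarrow> bool" where
  "is_normal_cone \<gamma> \<longleftrightarrow> (\<exists>d. normal_cone \<gamma> d)"

definition apex :: "'a::semigroup_mult cone \<Rightarrow> 'a set" where
  "apex \<gamma> = (SOME d. normal_cone \<gamma> d)"

definition cone_star :: "'a::semigroup_mult cone \<Rightarrow> 'a Lmor \<Rightarrow> 'a cone" where
  "cone_star \<gamma> h = restrict (\<lambda>c. Lcomp (\<gamma> c) h) Lobj"

definition Hset :: "'a::semigroup_mult cone \<Rightarrow> 'a set \<Rightarrow> 'a cone set" where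
  "Hset \<gamma> c = {cone_star \<gamma> (Lepi f) | f. f \<in> Lhom (apex \<gamma>) c}"

definition Hmap :: "'a::semigroup_mult cone \<Rightarrow> 'a Lmor \<Rightarrow> 'a cone \<Rightarrow> 'a cone" where
  "Hmap \<gamma> g = restrict (\<lambda>\<delta>. SOME \<delta>'. \<exists>f \<in> Lhom (apex \<gamma>) (Ldom g).
       \<delta> = cone_star \<gamma> (Lepi f) \<and> \<delta>' = cone_star \<gamma> (Lepi (Lcomp f g))) (Hset \<gamma> (Ldom g))"

text \<open>A Set-valued functor on L_G represented by its object map and morphism map
  (both extensional).\<close>
type_synonym 'a Sfun = "('a set \<Rightarrow> 'a cone set) \<times> ('a Lmor \<Rightarrow> 'a cone \<Rightarrow> 'a cone)"

definition Lmors :: "'a::semigroup_mult Lmor set" where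
  "Lmors = (\<Union>c \<in> Lobj. \<Union>d \<in> Lobj. Lhom c d)"

definition Hfun :: "'a::semigroup_mult cone \<Rightarrow> 'a Sfun" where
  "Hfun \<gamma> = (restrict (Hset \<gamma>) Lobj, restrict (Hmap \<gamma>) Lmors)"

definition eta :: "'a::semigroup_mult cone \<Rightarrow> 'a set \<Rightarrow> 'a cone \<Rightarrow> 'a Lmor" where
  "eta \<gamma> c x = (SOME f. f \<in> Lhom (apex \<gamma>) c \<and> x = cone_star \<gamma> (Lepi f))"

definition NLobj :: "'a::semigroup_mult Sfun set" where
  "NLobj = {Hfun \<gamma> | \<gamma>. is_normal_cone \<gamma>}"

definition NLhom :: "'a::semigroup_mult Sfun \<Rightarrow> 'a Sfun \<Rightarrow> ('a set \<Rightarrow> 'a cone \<Rightarrow> 'a cone) set" where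
  "NLhom F G = {\<tau>. \<tau> \<in> extensional Lobj \<and>
     (\<forall>c \<in> Lobj. \<tau> c \<in> extensional (fst F c) \<and> \<tau> c ` fst F c \<subseteq> fst G c) \<and>
     (\<forall>c \<in> Lobj. \<forall>d \<in> Lobj. \<forall>g \<in> Lhom c d. \<forall>x \<in> fst F c.
         snd G g (\<tau> c x) = \<tau> d (snd F g x))}"

definition NLid :: "'a::semigroup_mult Sfun \<Rightarrow> 'a set \<Rightarrow> 'a cone \<Rightarrow> 'a cone" where
  "NLid F = restrict (\<lambda>c. restrict (\<lambda>x. x) (fst F c)) Lobj"

text \<open>composition written left to right: first \<sigma> then \<tau>\<close>
definition NLcomp :: "'a::semigroup_mult Sfun \<Rightarrow> ('a set \<Rightarrow> 'a cone \<Rightarrow> 'a cone)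
     \<Rightarrow> ('a set \<Rightarrow> 'a cone \<Rightarrow> 'a cone) \<Rightarrow> 'a set \<Rightarrow> 'a cone \<Rightarrow> 'a cone" where
  "NLcomp F \<sigma> \<tau> = restrict (\<lambda>c. restrict (\<lambda>x. \<tau> c (\<sigma> c x)) (fst F c)) Lobj"

definition NLis_incl :: "'a::semigroup_mult Sfun \<Rightarrow> 'a Sfun \<Rightarrow> ('a set \<Rightarrow> 'a cone \<Rightarrow> 'a cone) \<Rightarrow> bool" where
  "NLis_incl F G \<tau> \<longleftrightarrow> \<tau> \<in> NLhom F G \<and> (\<forall>c \<in> Lobj. \<forall>x \<in> fst F c. \<tau> c x = x)"

definition NLsub :: "'a::semigroup_mult Sfun \<Rightarrow> 'a Sfun \<Rightarrow> bool" where
  "NLsub F G \<longleftrightarrow> (\<exists>\<tau>. NLis_incl F G \<tau>)"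

definition Rcls :: "'a::semigroup_mult \<Rightarrow> 'a set" where
  "Rcls e = {g \<in> Eset. Rrel g e}"

definition Robj :: "'a::semigroup_mult set set" where
  "Robj = Rcls ` Eset"

definition Rtrip :: "('a::semigroup_mult \<times> 'a \<times> 'a) set" where
  "Rtrip = {(e, u, f). e \<in> Eset \<and> f \<in> Eset \<and> (\<exists>s. u = f * s * e)}"

definition lmor :: "'a::semigroup_mult \<Rightarrow> 'a \<Rightarrow> 'a \<Rightarrow> ('a \<times> 'a \<times> 'a) set" where
  "lmor e u f = {(g, v, h). (g, v, h) \<in> Rtrip \<and> Rrel e g \<and> Rrel f h \<and> u = v * e}"

definition Rhom :: "'a::semigroup_mult set \<Rightarrow> 'a set \<Rightarrow> ('a \<times> 'a \<times> 'a) set set" where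
  "Rhom c d = {lmor e u f | e u f. (e, u, f) \<in> Rtrip \<and> Rcls e = c \<and> Rcls f = d}"

text \<open>composition (left to right): l(e,u,f) l(f,v,g) = l(e,vu,g)\<close>
definition Rcomp :: "('a::semigroup_mult \<times> 'a \<times> 'a) set \<Rightarrow> ('a \<times> 'a \<times> 'a) set \<Rightarrow> ('a \<times> 'a \<times> 'a) set" where
  "Rcomp m n = (SOME k. \<exists>e u f v g. (e, u, f) \<in> Rtrip \<and> (f, v, g) \<in> Rtrip \<and>
      m = lmor e u f \<and> n = lmor f v g \<and> k = lmor e (v * u) g)"

text \<open>subobject relation: c \<subseteq> d iff there is an inclusion l(e,e,f) with e omega^r f\<close>
definition Rsub :: "'a::semigroup_mult set \<Rightarrow> 'a set \<Rightarrow> bool" where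
  "Rsub c d \<longleftrightarrow> (\<exists>e \<in> Eset. \<exists>f \<in> Eset. c = Rcls e \<and> d = Rcls f \<and> f * e = e)"

definition Rincl :: "'a::semigroup_mult set \<Rightarrow> 'a set \<Rightarrow> ('a \<times> 'a \<times> 'a) set" where
  "Rincl c d = (SOME m. \<exists>e \<in> Eset. \<exists>f \<in> Eset. c = Rcls e \<and> d = Rcls f \<and> f * e = e
      \<and> m = lmor e e f)"

definition rcone :: "'a::semigroup_mult \<Rightarrow> 'a cone" where
  "rcone e = restrict (\<lambda>c. SOME m. \<exists>g \<in> Eset. c = Lcls g \<and> m = rmor g (g * e) e) Lobj"

definition Gamma_obj :: "'a::semigroup_mult set \<Rightarrow> 'a Sfun" where
  "Gamma_obj c = (SOME F. \<exists>e \<in> Eset. c = Rcls e \<and> F = Hfun (rcone e))"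

text \<open>eta_{r^e} ; L_G(r(f,u,e),-) ; eta_{r^f}^{-1}, componentwise\<close>
definition Gamma_formula :: "'a::semigroup_mult \<Rightarrow> 'a \<Rightarrow> 'a \<Rightarrow> 'a set \<Rightarrow> 'a cone \<Rightarrow> 'a cone" where
  "Gamma_formula e u f = restrict (\<lambda>c. restrict (\<lambda>x.
      cone_star (rcone f) (Lepi (Lcomp (rmor f u e) (eta (rcone e) c x))))
      (Hset (rcone e) c)) Lobj"

definition Gamma_mor :: "('a::semigroup_mult \<times> 'a \<times> 'a) set \<Rightarrow> 'a set \<Rightarrow> 'a cone \<Rightarrow> 'a cone" where
  "Gamma_mor m = (SOME \<tau>. \<exists>e u f. (e, u, f) \<in> Rtrip \<and> m = lmor e u f \<and> \<tau> = Gamma_formula e u f)"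

end

theory Submission
  imports Defs
begin



lemma E_iff: "e \<in> Eset \<longleftrightarrow> e * e = e" by (simp add: Eset_def)

lemma E_left: "e \<in> Eset \<Longrightarrow> e * (e * x) = e * x"
  by (metis E_iff mult.assoc)

lemma Lrel_sym: "Lrel a b \<Longrightarrow> Lrel b a"
  unfolding Lrel_def by auto

lemma Lrel_refl: "Lrel a a"
  unfolding Lrel_def by auto

lemma Lrel_trans: "Lrel a b \<Longrightarrow> Lrel b c \<Longrightarrow> Lrel a c"
  unfolding Lrel_def by (metis mult.assoc)

lemma Lrel_idem: "Lrel a h \<Longrightarrow> h \<in> Eset \<Longrightarrow> a * h = a"
  unfolding Lrel_def by (metis E_iff mult.assoc)

lemma Lrel_E: "e \<in> Eset \<Longrightarrow> g \<in> Eset \<Longrightarrow> Lrel e g \<longleftrightarrow> e * g = e \<and> g * e = g"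
  by (metis Lrel_def Lrel_idem Lrel_sym)

lemma Rrel_sym: "Rrel a b \<Longrightarrow> Rrel b a"
  unfolding Rrel_def by auto

lemma Rrel_refl: "Rrel a a"
  unfolding Rrel_def by auto

lemma Rrel_trans: "Rrel a b \<Longrightarrow> Rrel b c \<Longrightarrow> Rrel a c"
  unfolding Rrel_def by (metis mult.assoc)

lemma Rrel_idem: "Rrel a h \<Longrightarrow> h \<in> Eset \<Longrightarrow> h * a = a"
  unfolding Rrel_def by (metis E_iff mult.assoc)

lemma Rrel_E: "e \<in> Eset \<Longrightarrow> g \<in> Eset \<Longrightarrow> Rrel e g \<longleftrightarrow> g * e = e \<and> e * g = g"
  by (metis Rrel_def Rrel_idem Rrel_sym)

lemma reg_L:
  assumes reg: "\<forall>a::'a::semigroup_mult. \<exists>x. a*x*a = a"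
  shows "\<exists>h\<in>Eset. Lrel h (y::'a)"
proof -
  obtain x where x: "y*x*y = y" using reg by blast
  have "(x*y)*(x*y) = x*y" by (metis x mult.assoc)
  moreover have "Lrel (x*y) y" unfolding Lrel_def by (metis x mult.assoc)
  ultimately show ?thesis by (auto simp: E_iff)
qed

lemma reg_R:
  assumes reg: "\<forall>a::'a::semigroup_mult. \<exists>x. a*x*a = a"
  shows "\<exists>k\<in>Eset. Rrel k (y::'a) \<and> k * y = y \<and> (\<exists>x. k = y * x)"
proof -
  obtain x where x: "y*x*y = y" using reg by blast
  have "(y*x)*(y*x) = y*x" by (metis x mult.assoc)
  moreover have "Rrel (y*x) y" unfolding Rrel_def by (metis x mult.assoc)
  ultimately show ?thesis using x by (auto simp: E_iff)
qed

lemma Lcls_eq: "e \<in> Eset \<Longrightarrow> g \<in> Eset \<Longrightarrow> Lcls e = Lcls g \<longleftrightarrow> Lrel e g"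
  unfolding Lcls_def by (auto intro: Lrel_refl dest: Lrel_sym Lrel_trans)

lemma Rcls_eq: "e \<in> Eset \<Longrightarrow> g \<in> Eset \<Longrightarrow> Rcls e = Rcls g \<longleftrightarrow> Rrel e g"
  unfolding Rcls_def by (auto intro: Rrel_refl dest: Rrel_sym Rrel_trans)

lemma Ltrip_iff: "(e,u,f) \<in> Ltrip \<longleftrightarrow> e \<in> Eset \<and> f \<in> Eset \<and> e*u = u \<and> u*f = u"
  unfolding Ltrip_def by (auto simp: E_iff) (metis mult.assoc)+

lemma Rtrip_iff: "(e,u,f) \<in> Rtrip \<longleftrightarrow> e \<in> Eset \<and> f \<in> Eset \<and> f*u = u \<and> u*e = u"
  unfolding Rtrip_def by (auto simp: E_iff) (metis mult.assoc)+




lemma rmor_mem: "(g,v,h) \<in> rmor e u f \<longleftrightarrow> (g,v,h) \<in> Ltrip \<and> Lrel e g \<and> Lrel f h \<and> u = e*v"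
  unfolding rmor_def by auto

lemma rmor_self: "(e,u,f) \<in> Ltrip \<Longrightarrow> (e,u,f) \<in> rmor e u f"
  by (auto simp: rmor_mem Ltrip_iff Lrel_refl)

lemma rmor_eqI:
  assumes t: "(e,u,f) \<in> Ltrip" "(e',u',f') \<in> Ltrip" and r: "Lrel e e'" "Lrel f f'" "u = e*u'"
  shows "rmor e u f = rmor e' u' f'"
proof -
  have E: "e \<in> Eset" "e' \<in> Eset" using t by (auto simp: Ltrip_iff)
  have ee: "e*e' = e" "e'*e = e'" using r(1) E by (auto simp: Lrel_E)
  have u': "u' = e'*u" using t ee r(3) by (metis Ltrip_iff mult.assoc)
  have key: "\<And>g v h. (Lrel e g \<and> Lrel f h \<and> u = e * v) = (Lrel e' g \<and> Lrel f' h \<and> u' = e' * v)"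
    using r u' ee by (metis Lrel_sym Lrel_trans mult.assoc)
  show ?thesis unfolding rmor_def using key by simp
qed

lemma rmor_eqD:
  assumes t: "(e,u,f) \<in> Ltrip" and eq: "rmor e u f = rmor e' u' f'"
  shows "Lrel e' e \<and> Lrel f' f \<and> u' = e'*u"
  using rmor_self[OF t] eq by (auto simp: rmor_mem)

lemma rmor_eq_iff:
  assumes t: "(e,u,f) \<in> Ltrip" "(e',u',f') \<in> Ltrip"
  shows "rmor e u f = rmor e' u' f' \<longleftrightarrow> Lrel e e' \<and> Lrel f f' \<and> u = e*u'"
  by (metis rmor_eqD rmor_eqI t)

lemma Lhom_mem: "m \<in> Lhom c d \<longleftrightarrow> (\<exists>e u f. (e,u,f) \<in> Ltrip \<and> Lcls e = c \<and> Lcls f = d \<and> m = rmor e u f)"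
  unfolding Lhom_def by auto

lemma Lhom_repr:
  assumes E: "e \<in> Eset" "g \<in> Eset"
  shows "m \<in> Lhom (Lcls e) (Lcls g) \<longleftrightarrow> (\<exists>y. e*y = y \<and> y*g = y \<and> m = rmor e y g)"
proof
  assume "m \<in> Lhom (Lcls e) (Lcls g)"
  then obtain e1 u1 g1 where t: "(e1,u1,g1) \<in> Ltrip" and c: "Lcls e1 = Lcls e" "Lcls g1 = Lcls g"
    and m: "m = rmor e1 u1 g1" by (auto simp: Lhom_mem)
  have E1: "e1 \<in> Eset" "g1 \<in> Eset" using t by (auto simp: Ltrip_iff)
  have L: "Lrel e1 e" "Lrel g1 g" using c E E1 Lcls_eq by blast+
  have ee: "e1*e = e1" "e*e1 = e" "g1*g = g1" "g*g1 = g" using L E E1 by (auto simp: Lrel_E)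
  have u1: "e1*u1 = u1" "u1*g1 = u1" using t by (auto simp: Ltrip_iff)
  define y where "y = e*u1"
  have y1: "e*y = y" using E by (simp add: y_def E_left)
  have y2: "y*g = y" unfolding y_def by (metis u1 ee mult.assoc)
  have "rmor e1 u1 g1 = rmor e y g"
    by (rule rmor_eqI) (use t E y1 y2 L in \<open>auto simp: Ltrip_iff y_def\<close>, metis ee(1) mult.assoc u1(1))
  then show "\<exists>y. e*y = y \<and> y*g = y \<and> m = rmor e y g" using y1 y2 m by blast
next
  assume "\<exists>y. e*y = y \<and> y*g = y \<and> m = rmor e y g"
  then show "m \<in> Lhom (Lcls e) (Lcls g)" using E by (auto simp: Lhom_mem Ltrip_iff)
qed

lemma Lhom_objs: "m \<in> Lhom c d \<Longrightarrow> c \<in> Lobj \<and> d \<in> Lobj"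
  by (auto simp: Lhom_mem Lobj_def Ltrip_iff)

lemma Lhom_unique: "m \<in> Lhom c d \<Longrightarrow> m \<in> Lhom c' d' \<Longrightarrow> c = c' \<and> d = d'"
  unfolding Lhom_mem by (metis Lcls_eq Ltrip_iff rmor_eqD Lrel_sym)

lemma Lobj_E: "c \<in> Lobj \<Longrightarrow> \<exists>e\<in>Eset. c = Lcls e"
  by (auto simp: Lobj_def)

lemma Lcls_Lobj: "e \<in> Eset \<Longrightarrow> Lcls e \<in> Lobj"
  by (auto simp: Lobj_def)

lemma Ldom_eq: "m \<in> Lhom c d \<Longrightarrow> Ldom m = c"
  unfolding Ldom_def
  by (rule some_equality) (use Lhom_objs Lhom_unique in blast)+

lemma Lmors_iff: "m \<in> Lmors \<longleftrightarrow> (\<exists>c d. m \<in> Lhom c d)"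
  unfolding Lmors_def using Lhom_objs by blast

lemma Lcomp_rmor:
  assumes t: "(e,u,f) \<in> Ltrip" "(f,v,g) \<in> Ltrip"
  shows "Lcomp (rmor e u f) (rmor f v g) = rmor e (u*v) g"
  unfolding Lcomp_def
proof (rule some_equality)
  show "\<exists>e' u' f' v' g'. (e', u', f') \<in> Ltrip \<and> (f', v', g') \<in> Ltrip \<and>
        rmor e u f = rmor e' u' f' \<and> rmor f v g = rmor f' v' g' \<and> rmor e (u*v) g = rmor e' (u' * v') g'"
    using t by blast
next
  fix k assume "\<exists>e1 u1 f1 v1 g1. (e1, u1, f1) \<in> Ltrip \<and> (f1, v1, g1) \<in> Ltrip \<and>
        rmor e u f = rmor e1 u1 f1 \<and> rmor f v g = rmor f1 v1 g1 \<and> k = rmor e1 (u1 * v1) g1"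
  then obtain e1 u1 f1 v1 g1 where t1: "(e1, u1, f1) \<in> Ltrip" "(f1, v1, g1) \<in> Ltrip"
    and q: "rmor e u f = rmor e1 u1 f1" "rmor f v g = rmor f1 v1 g1" and k: "k = rmor e1 (u1 * v1) g1"
    by blast
  have r1: "Lrel e e1" "Lrel f f1" "u = e*u1" using q(1) t(1) t1(1) rmor_eq_iff by blast+
  have r2: "Lrel g g1" "v = f*v1" using q(2) t(2) t1(2) rmor_eq_iff by blast+
  have E: "f \<in> Eset" "f1 \<in> Eset" using t t1 by (auto simp: Ltrip_iff)
  have ff: "f1*f = f1" using r1(2) E by (auto simp: Lrel_E)
  have uu: "u1*f1 = u1" using t1 by (auto simp: Ltrip_iff)
  have "u*v = e*(u1*v1)" using r1(3) r2(2) ff uu by (metis mult.assoc)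
  moreover have "(e, u*v, g) \<in> Ltrip" "(e1, u1*v1, g1) \<in> Ltrip" using t t1
    by (auto simp: Ltrip_iff) (metis mult.assoc)+
  ultimately show "k = rmor e (u*v) g" using k r1 r2 rmor_eqI by metis
qed

lemma Lepi_rmor:
  assumes t: "(e,y,f) \<in> Ltrip" and h: "h \<in> Eset" "Lrel h y"
  shows "Lepi (rmor e y f) = rmor e y h"
  unfolding Lepi_def
proof (rule some_equality)
  show "\<exists>e' y' f' h'. (e', y', f') \<in> Ltrip \<and> rmor e y f = rmor e' y' f' \<and> h' \<in> Eset \<and> Lrel h' y' \<and> rmor e y h = rmor e' y' h'"
    using t h by blast
next
  fix k assume "\<exists>e1 y1 f1 h1. (e1, y1, f1) \<in> Ltrip \<and> rmor e y f = rmor e1 y1 f1 \<and> h1 \<in> Eset \<and> Lrel h1 y1 \<and> k = rmor e1 y1 h1"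
  then obtain e1 y1 f1 h1 where t1: "(e1, y1, f1) \<in> Ltrip" and q: "rmor e y f = rmor e1 y1 f1"
    and h1: "h1 \<in> Eset" "Lrel h1 y1" and k: "k = rmor e1 y1 h1" by blast
  have r: "Lrel e e1" "u = u" "y = e*y1" using q t t1 rmor_eq_iff by blast+
  have E: "e \<in> Eset" "e1 \<in> Eset" using t t1 by (auto simp: Ltrip_iff)
  have ee: "e1*e = e1" using r(1) E by (auto simp: Lrel_E dest: Lrel_sym)
  have yy: "y1 = e1*y" using ee t1 r(3) by (metis Ltrip_iff mult.assoc)
  have Ly: "Lrel y y1" unfolding Lrel_def using r(3) yy by blast
  have Lh: "Lrel h h1" using h(2) Ly h1(2) by (meson Lrel_sym Lrel_trans)
  have T: "(e, y, h) \<in> Ltrip" "(e1, y1, h1) \<in> Ltrip" using t t1 h h1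
    by (auto simp: Ltrip_iff dest: Lrel_sym intro: Lrel_idem)
  show "k = rmor e y h" using k rmor_eqI[OF T(1) T(2) r(1) Lh r(3)] by simp
qed

lemma Lid_eq: "e \<in> Eset \<Longrightarrow> Lid (Lcls e) = rmor e e e"
  unfolding Lid_def
  apply (rule some_equality)
   apply blast
  apply clarify
  apply (rule rmor_eqI)
  by (auto simp: Ltrip_iff E_iff Lcls_eq Lrel_E)

lemma Lincl_eq: "e \<in> Eset \<Longrightarrow> f \<in> Eset \<Longrightarrow> e*f = e \<Longrightarrow> Lincl (Lcls e) (Lcls f) = rmor e e f"
  unfolding Lincl_def
  apply (rule some_equality)
   apply blast
  apply clarify
  apply (rule rmor_eqI)
  by (auto simp: Ltrip_iff E_iff Lcls_eq Lrel_E)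

lemma Lsub_repr: "Lsub c d \<longleftrightarrow> (\<exists>e\<in>Eset. \<exists>f\<in>Eset. c = Lcls e \<and> d = Lcls f \<and> e*f = e)"
  by (simp add: Lsub_def)

lemma Liso_id: "e \<in> Eset \<Longrightarrow> Liso (rmor e e e)"
  unfolding Liso_def
  apply (rule bexI[of _ "Lcls e"], rule bexI[of _ "Lcls e"])
  apply (intro conjI)
  apply (auto simp: Lhom_mem Lcls_Lobj)
  apply (rule_tac x=e in exI, rule_tac x=e in exI, rule_tac x=e in exI, simp add: Ltrip_iff E_iff)
  apply (rule_tac x="rmor e e e" in bexI)
  apply (simp add: Lcomp_rmor Ltrip_iff E_iff Lid_eq)
  apply (auto simp: Lhom_mem)
  apply (rule_tac x=e in exI, rule_tac x=e in exI, rule_tac x=e in exI, simp add: Ltrip_iff E_iff)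
  done




definition Dh :: "'a::semigroup_mult \<Rightarrow> 'a \<Rightarrow> 'a cone" where
  "Dh y h = restrict (\<lambda>c. SOME m. \<exists>k\<in>Eset. c = Lcls k \<and> m = rmor k (k*y) h) Lobj"

definition hL :: "'a::semigroup_mult \<Rightarrow> 'a" where
  "hL y = (SOME h. h \<in> Eset \<and> Lrel h y)"

definition D :: "'a::semigroup_mult \<Rightarrow> 'a cone" where
  "D y = Dh y (hL y)"

definition Zs :: "'a::semigroup_mult \<Rightarrow> 'a \<Rightarrow> 'a \<Rightarrow> 'a set" where
  "Zs y a b = {y*w | w. a*w = w \<and> w*b = w}"

lemma rcone_Dh: "rcone e = Dh e e"
  by (simp add: rcone_def Dh_def)

lemma Dh_val:
  assumes "k \<in> Eset" "h \<in> Eset" "y*h = y"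
  shows "Dh y h (Lcls k) = rmor k (k*y) h"
proof -
  have "(SOME m. \<exists>k'\<in>Eset. Lcls k = Lcls k' \<and> m = rmor k' (k'*y) h) = rmor k (k*y) h"
  proof (rule some_equality)
    fix m assume "\<exists>k'\<in>Eset. Lcls k = Lcls k' \<and> m = rmor k' (k'*y) h"
    then obtain k' where k': "k' \<in> Eset" "Lcls k = Lcls k'" "m = rmor k' (k'*y) h" by blast
    have L: "Lrel k k'" using k' assms Lcls_eq by blast
    have kk: "k*k' = k" "k'*k = k'" using L k' assms by (auto simp: Lrel_E)
    have kk2: "k'*(k*y) = k'*y" using kk by (metis mult.assoc)
    have t1: "(k, k*y, h) \<in> Ltrip" "(k', k'*y, h) \<in> Ltrip" using assms k'
      by (auto simp: Ltrip_iff E_left mult.assoc)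
    have "rmor k' (k'*y) h = rmor k (k*y) h"
      by (rule rmor_eqI[OF t1(2) t1(1)]) (use L kk2 in \<open>auto simp: Lrel_sym Lrel_refl\<close>)
    then show "m = rmor k (k*y) h" using k'(3) by simp
  qed (use assms in blast)
  then show ?thesis using assms by (simp add: Dh_def Lcls_Lobj)
qed

lemma Dh_out: "c \<notin> Lobj \<Longrightarrow> Dh y h c = undefined"
  by (simp add: Dh_def)

lemma cone_ext:
  assumes "\<gamma> \<in> extensional Lobj" "\<delta> \<in> extensional Lobj"
    and "\<And>k. k \<in> Eset \<Longrightarrow> \<gamma> (Lcls k) = \<delta> (Lcls k)"
  shows "\<gamma> = \<delta>"
  by (rule extensionalityI[OF assms(1,2)]) (use assms(3) Lobj_E in blast)

lemma Dh_ext: "Dh y h \<in> extensional Lobj"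
  by (simp add: Dh_def)

lemma Dh_cong:
  assumes "h \<in> Eset" "h' \<in> Eset" "Lrel h h'" "y*h = y"
  shows "Dh y h = Dh y h'"
proof (rule cone_ext[OF Dh_ext Dh_ext])
  fix k :: 'a assume k: "k \<in> Eset"
  have hh: "h*h' = h" "h'*h = h'" using assms by (auto simp: Lrel_E)
  have y': "y*h' = y" using hh assms by (metis mult.assoc)
  show "Dh y h (Lcls k) = Dh y h' (Lcls k)"
    by (simp add: Dh_val k assms y', rule rmor_eqI)
       (use assms k y' in \<open>auto simp: Ltrip_iff E_left Lrel_refl mult.assoc\<close>)
qed

lemma hL:
  assumes reg: "\<forall>a::'a::semigroup_mult. \<exists>x. a*x*a = a"
  shows "hL (y::'a) \<in> Eset \<and> Lrel (hL y) y"
  unfolding hL_def using reg_L[OF reg] by (rule someI2_bex) blast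

lemma D_eq:
  assumes reg: "\<forall>a::'a::semigroup_mult. \<exists>x. a*x*a = a"
    and "h \<in> Eset" "Lrel h (y::'a)"
  shows "Dh y h = D y"
proof -
  have "Lrel h (hL y)" using hL[OF reg] assms by (meson Lrel_sym Lrel_trans)
  moreover have "y*h = y" using assms by (metis Lrel_idem Lrel_sym)
  ultimately show ?thesis unfolding D_def using assms hL[OF reg] Dh_cong by blast
qed

lemma D_val:
  assumes reg: "\<forall>a::'a::semigroup_mult. \<exists>x. a*x*a = a" and k: "k \<in> Eset"
  shows "D (y::'a) (Lcls k) = rmor k (k*y) (hL y)"
  unfolding D_def using hL[OF reg, of y] by (intro Dh_val k) (auto dest: Lrel_sym intro: Lrel_idem)

lemma D_inj:
  assumes reg: "\<forall>a::'a::semigroup_mult. \<exists>x. a*x*a = a"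
    and eq: "D z = D (z'::'a)" and j: "j \<in> Eset"
  shows "j*z = j*z'"
proof -
  have "rmor j (j*z) (hL z) = rmor j (j*z') (hL z')" using eq D_val[OF reg j] by metis
  moreover have "z * hL z = z" "z' * hL z' = z'" using hL[OF reg, of z] hL[OF reg, of z']
    by (meson Lrel_idem Lrel_sym)+
  moreover have "(j, j*z, hL z) \<in> Ltrip" "(j, j*z', hL z') \<in> Ltrip"
    using hL[OF reg, of z] hL[OF reg, of z'] j calculation(2,3)
    by (auto simp: Ltrip_iff E_left mult.assoc)
  ultimately have "j*z = j*(j*z')" using rmor_eq_iff by blast
  then show ?thesis using j by (simp add: E_left)
qed

lemma D_inj2:
  assumes reg: "\<forall>a::'a::semigroup_mult. \<exists>x. a*x*a = a"
    and eq: "D z = D (z'::'a)" and j: "j \<in> Eset" "j*z = z" "j*z' = z'"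
  shows "z = z'"
  using D_inj[OF reg eq j(1)] j by simp

lemma Lrel_yw: assumes "Lrel a y" "a*w = w" shows "Lrel w (y*w)"
proof -
  have "w = y*w \<or> (\<exists>x. w = x*(y*w))"
  proof (cases "a = y")
    case True then show ?thesis using assms by simp
  next
    case False
    then obtain z where "a = z*y" using assms(1) unfolding Lrel_def by blast
    then have "w = z*(y*w)" using assms(2) by (simp add: mult.assoc)
    then show ?thesis by blast
  qed
  then show ?thesis unfolding Lrel_def by blast
qed

lemma cone_star_Dh:
  assumes a: "a \<in> Eset" "y*a = y" and t: "(a,w,h) \<in> Ltrip"
  shows "cone_star (Dh y a) (rmor a w h) = Dh (y*w) h"
proof (rule cone_ext)
  show "cone_star (Dh y a) (rmor a w h) \<in> extensional Lobj" by (simp add: cone_star_def)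
  show "Dh (y*w) h \<in> extensional Lobj" by (rule Dh_ext)
  fix k :: 'a assume k: "k \<in> Eset"
  have h: "h \<in> Eset" "w*h = w" using t by (auto simp: Ltrip_iff)
  have t1: "(k, k*y, a) \<in> Ltrip" using k a by (auto simp: Ltrip_iff E_left mult.assoc)
  have "cone_star (Dh y a) (rmor a w h) (Lcls k) = Lcomp (rmor k (k*y) a) (rmor a w h)"
    by (simp add: cone_star_def Lcls_Lobj k Dh_val a)
  also have "\<dots> = rmor k (k*y*w) h" by (rule Lcomp_rmor[OF t1 t])
  also have "\<dots> = Dh (y*w) h (Lcls k)" using Dh_val[OF k h(1), of "y*w"] h by (simp add: mult.assoc)
  finally show "cone_star (Dh y a) (rmor a w h) (Lcls k) = Dh (y*w) h (Lcls k)" .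
qed

lemma cs_Lepi:
  assumes reg: "\<forall>a::'a::semigroup_mult. \<exists>x. a*x*a = a"
    and a: "a \<in> Eset" "Lrel a (y::'a)" and b: "b \<in> Eset" "a*w = w" "w*b = w"
  shows "cone_star (Dh y a) (Lepi (rmor a w b)) = D (y*w)"
proof -
  let ?h = "hL w"
  have h: "?h \<in> Eset" "Lrel ?h w" using hL[OF reg] by blast+
  have t: "(a,w,b) \<in> Ltrip" using a b by (auto simp: Ltrip_iff)
  have t2: "(a,w,?h) \<in> Ltrip" using a b h by (auto simp: Ltrip_iff dest: Lrel_sym intro: Lrel_idem)
  have ya: "y*a = y" using a by (metis Lrel_idem Lrel_sym)
  have "cone_star (Dh y a) (Lepi (rmor a w b)) = Dh (y*w) ?h"
    using Lepi_rmor[OF t h] cone_star_Dh[OF a(1) ya t2] by simp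
  also have "\<dots> = D (y*w)"
    using D_eq[OF reg h(1)] h(2) Lrel_yw[OF a(2) b(2)] Lrel_trans by blast
  finally show ?thesis .
qed

lemma Hset_Dh:
  assumes reg: "\<forall>a::'a::semigroup_mult. \<exists>x. a*x*a = a"
    and a: "a \<in> Eset" "Lrel a (y::'a)" "apex (Dh y a) = Lcls a" and b: "b \<in> Eset"
  shows "Hset (Dh y a) (Lcls b) = D ` Zs y a b"
proof (rule set_eqI)
  fix x
  have "x \<in> Hset (Dh y a) (Lcls b) \<longleftrightarrow> (\<exists>f. x = cone_star (Dh y a) (Lepi f) \<and> f \<in> Lhom (Lcls a) (Lcls b))"
    unfolding Hset_def a(3) by blast
  also have "\<dots> \<longleftrightarrow> (\<exists>w. a*w = w \<and> w*b = w \<and> x = cone_star (Dh y a) (Lepi (rmor a w b)))"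
    by (simp only: Lhom_repr[OF a(1) b]) blast
  also have "\<dots> \<longleftrightarrow> (\<exists>w. a*w = w \<and> w*b = w \<and> x = D (y*w))"
  proof -
    have eq: "\<And>w. a*w = w \<Longrightarrow> w*b = w \<Longrightarrow> cone_star (Dh y a) (Lepi (rmor a w b)) = D (y*w)"
      using cs_Lepi[OF reg a(1,2) b] by blast
    show ?thesis
    proof
      assume "\<exists>w. a*w = w \<and> w*b = w \<and> x = cone_star (Dh y a) (Lepi (rmor a w b))"
      then obtain w where "a*w = w" "w*b = w" "x = cone_star (Dh y a) (Lepi (rmor a w b))" by blast
      then show "\<exists>w. a*w = w \<and> w*b = w \<and> x = D (y*w)" using eq by metis
    next
      assume "\<exists>w. a*w = w \<and> w*b = w \<and> x = D (y*w)"
      then obtain w where "a*w = w" "w*b = w" "x = D (y*w)" by blast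
      then show "\<exists>w. a*w = w \<and> w*b = w \<and> x = cone_star (Dh y a) (Lepi (rmor a w b))" using eq by metis
    qed
  qed
  also have "\<dots> \<longleftrightarrow> x \<in> D ` Zs y a b" unfolding Zs_def by blast
  finally show "x \<in> Hset (Dh y a) (Lcls b) \<longleftrightarrow> x \<in> D ` Zs y a b" .
qed

lemma Hmap_Dh:
  assumes reg: "\<forall>a::'a::semigroup_mult. \<exists>x. a*x*a = a"
    and a: "a \<in> Eset" "Lrel a (y::'a)" "apex (Dh y a) = Lcls a"
    and t: "(b,v,b') \<in> Ltrip" and z: "z \<in> Zs y a b"
  shows "Hmap (Dh y a) (rmor b v b') (D z) = D (z*v)"
proof -
  have b: "b \<in> Eset" "b' \<in> Eset" "b*v = v" "v*b' = v" using t by (auto simp: Ltrip_iff)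
  obtain w where w: "z = y*w" "a*w = w" "w*b = w" using z by (auto simp: Zs_def)
  have g: "rmor b v b' \<in> Lhom (Lcls b) (Lcls b')" using t by (auto simp: Lhom_mem)
  have dom: "Ldom (rmor b v b') = Lcls b" using Ldom_eq[OF g] .
  have zin: "D z \<in> Hset (Dh y a) (Lcls b)" using Hset_Dh[OF reg a b(1)] z by simp
  obtain k where k: "k \<in> Eset" "k*y = y" using reg_R[OF reg, of y] by blast
  have tw: "(a,w,b) \<in> Ltrip" using a b w by (auto simp: Ltrip_iff)
  have comp: "Lcomp (rmor a w b) (rmor b v b') = rmor a (w*v) b'" using Lcomp_rmor[OF tw t] .
  have wv: "a*(w*v) = w*v" "(w*v)*b' = w*v" using w b by (metis mult.assoc)+
  have "(SOME \<delta>'. \<exists>f\<in>Lhom (apex (Dh y a)) (Ldom (rmor b v b')).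
       D z = cone_star (Dh y a) (Lepi f) \<and> \<delta>' = cone_star (Dh y a) (Lepi (Lcomp f (rmor b v b')))) = D (z*v)"
  proof (rule some_equality)
    show "\<exists>f\<in>Lhom (apex (Dh y a)) (Ldom (rmor b v b')).
       D z = cone_star (Dh y a) (Lepi f) \<and> D (z*v) = cone_star (Dh y a) (Lepi (Lcomp f (rmor b v b')))"
    proof (rule bexI[of _ "rmor a w b"])
      show "rmor a w b \<in> Lhom (apex (Dh y a)) (Ldom (rmor b v b'))"
        unfolding dom a(3) using Lhom_repr[OF a(1) b(1)] w by blast
      show "D z = cone_star (Dh y a) (Lepi (rmor a w b)) \<and>
        D (z * v) = cone_star (Dh y a) (Lepi (Lcomp (rmor a w b) (rmor b v b')))"
        using cs_Lepi[OF reg a(1,2) b(1) w(2,3)] cs_Lepi[OF reg a(1,2) b(2) wv] comp w(1)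
        by (simp add: mult.assoc)
    qed
  next
    fix \<delta>' assume "\<exists>f\<in>Lhom (apex (Dh y a)) (Ldom (rmor b v b')).
       D z = cone_star (Dh y a) (Lepi f) \<and> \<delta>' = cone_star (Dh y a) (Lepi (Lcomp f (rmor b v b')))"
    then obtain f where f: "f \<in> Lhom (Lcls a) (Lcls b)" and q: "D z = cone_star (Dh y a) (Lepi f)"
      and d: "\<delta>' = cone_star (Dh y a) (Lepi (Lcomp f (rmor b v b')))" unfolding dom a(3) by blast
    obtain w' where w': "a*w' = w'" "w'*b = w'" "f = rmor a w' b" using f Lhom_repr[OF a(1) b(1)] by blast
    have tw': "(a,w',b) \<in> Ltrip" using a b w' by (auto simp: Ltrip_iff)
    have wv': "a*(w'*v) = w'*v" "(w'*v)*b' = w'*v" using w' b by (metis mult.assoc)+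
    have "D z = D (y*w')" using q cs_Lepi[OF reg a(1,2) b(1) w'(1,2)] w'(3) by simp
    moreover have "k*z = z" "k*(y*w') = y*w'" using k w(1) by (simp_all add: mult.assoc[symmetric])
    ultimately have zz: "z = y*w'" using D_inj2[OF reg _ k(1)] by blast
    have "\<delta>' = D (y*(w'*v))" using d w'(3) Lcomp_rmor[OF tw' t] cs_Lepi[OF reg a(1,2) b(2) wv'] by simp
    then show "\<delta>' = D (z*v)" using zz by (simp add: mult.assoc)
  qed
  then show ?thesis using zin by (simp add: Hmap_def dom)
qed

lemma Hmap_out: "x \<notin> Hset \<gamma> (Ldom g) \<Longrightarrow> Hmap \<gamma> g x = undefined"
  by (simp add: Hmap_def)

lemma apex_eq:
  assumes "normal_cone \<gamma> d" shows "apex \<gamma> = d"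
proof -
  have n: "normal_cone \<gamma> (apex \<gamma>)" unfolding apex_def using assms by (rule someI)
  have "\<exists>c\<in>Lobj. Liso (\<gamma> c)" using assms by (simp add: normal_cone_def)
  then obtain c where c: "c \<in> Lobj" "Liso (\<gamma> c)" by blast
  have "\<gamma> c \<in> Lhom c d" "\<gamma> c \<in> Lhom c (apex \<gamma>)" using assms n c by (auto simp: normal_cone_def)
  then show ?thesis using Lhom_unique by blast
qed

lemma rcone_val: "e \<in> Eset \<Longrightarrow> k \<in> Eset \<Longrightarrow> rcone e (Lcls k) = rmor k (k*e) e"
  by (simp add: rcone_Dh Dh_val E_iff[symmetric])

lemma rcone_normal:
  assumes e: "e \<in> Eset" shows "normal_cone (rcone e) (Lcls e)"
  unfolding normal_cone_def
proof (intro conjI)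
  show "Lcls e \<in> Lobj" using e by (rule Lcls_Lobj)
  show "rcone e \<in> extensional Lobj" by (simp add: rcone_Dh Dh_ext)
  show "\<forall>c\<in>Lobj. rcone e c \<in> Lhom c (Lcls e)"
  proof
    fix c :: "'a set" assume "c \<in> Lobj"
    then obtain k where k: "k \<in> Eset" "c = Lcls k" using Lobj_E by blast
    have ee: "e*e = e" using e by (simp add: E_iff)
    have "k*(k*e) = k*e" "(k*e)*e = k*e" using k e ee by (auto simp: E_left mult.assoc)
    then show "rcone e c \<in> Lhom c (Lcls e)" using k e
      by (auto simp: rcone_val Lhom_repr)
  qed
  show "\<forall>c\<in>Lobj. \<forall>c'\<in>Lobj. Lsub c c' \<longrightarrow> Lcomp (Lincl c c') (rcone e c') = rcone e c"
  proof (intro ballI impI)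
    fix c c' :: "'a set" assume "Lsub c c'"
    then obtain k k' where k: "k \<in> Eset" "k' \<in> Eset" "c = Lcls k" "c' = Lcls k'" "k*k' = k"
      by (auto simp: Lsub_def)
    have ee: "e*e = e" using e by (simp add: E_iff)
    have kk: "k*k = k" using k by (simp add: E_iff)
    have t1: "(k,k,k') \<in> Ltrip" "(k',k'*e,e) \<in> Ltrip" using k e ee kk
      by (auto simp: Ltrip_iff E_left mult.assoc)
    have "Lcomp (Lincl c c') (rcone e c') = Lcomp (rmor k k k') (rmor k' (k'*e) e)"
      using k e by (simp add: Lincl_eq rcone_val)
    also have "\<dots> = rmor k (k*(k'*e)) e" using Lcomp_rmor[OF t1] .
    also have "k*(k'*e) = k*e" using k(5) by (simp add: mult.assoc[symmetric])
    finally show "Lcomp (Lincl c c') (rcone e c') = rcone e c"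
      using k e by (simp add: rcone_val)
  qed
  show "\<exists>c\<in>Lobj. Liso (rcone e c)"
  proof (rule bexI[of _ "Lcls e"])
    have "e*e = e" using e by (simp add: E_iff)
    then show "Liso (rcone e (Lcls e))" using e by (simp add: rcone_val Liso_id)
  qed (use e Lcls_Lobj in blast)
qed

lemma apex_rcone: "e \<in> Eset \<Longrightarrow> apex (rcone e) = Lcls e"
  using apex_eq rcone_normal by blast




lemma lmor_mem: "(g,v,h) \<in> lmor e u f \<longleftrightarrow> (g,v,h) \<in> Rtrip \<and> Rrel e g \<and> Rrel f h \<and> u = v*e"
  unfolding lmor_def by auto

lemma lmor_self: "(e,u,f) \<in> Rtrip \<Longrightarrow> (e,u,f) \<in> lmor e u f"
  by (auto simp: lmor_mem Rtrip_iff Rrel_refl)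

lemma lmor_eqI:
  assumes t: "(e,u,f) \<in> Rtrip" "(e',u',f') \<in> Rtrip" and r: "Rrel e e'" "Rrel f f'" "u = u'*e"
  shows "lmor e u f = lmor e' u' f'"
proof -
  have E: "e \<in> Eset" "e' \<in> Eset" using t by (auto simp: Rtrip_iff)
  have ee: "e'*e = e" "e*e' = e'" using r(1) E by (auto simp: Rrel_E)
  have u': "u' = u*e'" using t ee r(3) by (metis Rtrip_iff mult.assoc)
  have key: "\<And>g v h. (Rrel e g \<and> Rrel f h \<and> u = v*e) = (Rrel e' g \<and> Rrel f' h \<and> u' = v*e')"
    using r u' ee by (metis Rrel_sym Rrel_trans mult.assoc)
  show ?thesis unfolding lmor_def using key by simp
qed

lemma lmor_eqD:
  assumes t: "(e,u,f) \<in> Rtrip" and eq: "lmor e u f = lmor e' u' f'"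
  shows "Rrel e' e \<and> Rrel f' f \<and> u' = u*e'"
  using lmor_self[OF t] eq by (auto simp: lmor_mem)

lemma lmor_eq_iff:
  assumes t: "(e,u,f) \<in> Rtrip" "(e',u',f') \<in> Rtrip"
  shows "lmor e u f = lmor e' u' f' \<longleftrightarrow> Rrel e e' \<and> Rrel f f' \<and> u = u'*e"
  by (metis lmor_eqD lmor_eqI t)

lemma Rhom_mem: "m \<in> Rhom c d \<longleftrightarrow> (\<exists>e u f. (e,u,f) \<in> Rtrip \<and> Rcls e = c \<and> Rcls f = d \<and> m = lmor e u f)"
  unfolding Rhom_def by auto

lemma Rhom_repr:
  assumes E: "e \<in> Eset" "f \<in> Eset"
  shows "m \<in> Rhom (Rcls e) (Rcls f) \<longleftrightarrow> (\<exists>u. f*u = u \<and> u*e = u \<and> m = lmor e u f)"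
proof
  assume "m \<in> Rhom (Rcls e) (Rcls f)"
  then obtain e1 u1 f1 where t: "(e1,u1,f1) \<in> Rtrip" and c: "Rcls e1 = Rcls e" "Rcls f1 = Rcls f"
    and m: "m = lmor e1 u1 f1" by (auto simp: Rhom_mem)
  have E1: "e1 \<in> Eset" "f1 \<in> Eset" using t by (auto simp: Rtrip_iff)
  have L: "Rrel e1 e" "Rrel f1 f" using c E E1 Rcls_eq by blast+
  have ee: "e*e1 = e1" "e1*e = e" "f*f1 = f1" "f1*f = f" using L E E1 by (auto simp: Rrel_E)
  have u1: "f1*u1 = u1" "u1*e1 = u1" using t by (auto simp: Rtrip_iff)
  define u where "u = u1*e"
  have y1: "u*e = u" using E unfolding u_def by (metis E_iff mult.assoc)
  have y2: "f*u = u" unfolding u_def by (metis u1 ee mult.assoc)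
  have t2: "(e,u,f) \<in> Rtrip" using E y1 y2 by (auto simp: Rtrip_iff)
  have "lmor e u f = lmor e1 u1 f1"
    by (rule lmor_eqI[OF t2 t]) (use L in \<open>auto simp: u_def intro: Rrel_sym\<close>)
  then show "\<exists>u. f*u = u \<and> u*e = u \<and> m = lmor e u f" using y1 y2 m by metis
next
  assume "\<exists>u. f*u = u \<and> u*e = u \<and> m = lmor e u f"
  then show "m \<in> Rhom (Rcls e) (Rcls f)" using E by (auto simp: Rhom_mem Rtrip_iff)
qed

lemma Robj_E: "c \<in> Robj \<Longrightarrow> \<exists>e\<in>Eset. c = Rcls e"
  by (auto simp: Robj_def)

lemma Rcls_Robj: "e \<in> Eset \<Longrightarrow> Rcls e \<in> Robj"
  by (auto simp: Robj_def)

lemma Rcomp_lmor: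
  assumes t: "(e,u,f) \<in> Rtrip" "(f,v,g) \<in> Rtrip"
  shows "Rcomp (lmor e u f) (lmor f v g) = lmor e (v*u) g"
  unfolding Rcomp_def
proof (rule some_equality)
  show "\<exists>e' u' f' v' g'. (e', u', f') \<in> Rtrip \<and> (f', v', g') \<in> Rtrip \<and>
        lmor e u f = lmor e' u' f' \<and> lmor f v g = lmor f' v' g' \<and> lmor e (v*u) g = lmor e' (v' * u') g'"
    using t by blast
next
  fix k assume "\<exists>e1 u1 f1 v1 g1. (e1, u1, f1) \<in> Rtrip \<and> (f1, v1, g1) \<in> Rtrip \<and>
        lmor e u f = lmor e1 u1 f1 \<and> lmor f v g = lmor f1 v1 g1 \<and> k = lmor e1 (v1 * u1) g1"
  then obtain e1 u1 f1 v1 g1 where t1: "(e1, u1, f1) \<in> Rtrip" "(f1, v1, g1) \<in> Rtrip"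
    and q: "lmor e u f = lmor e1 u1 f1" "lmor f v g = lmor f1 v1 g1" and k: "k = lmor e1 (v1 * u1) g1"
    by blast
  have r1: "Rrel e e1" "Rrel f f1" "u = u1*e" using q(1) t(1) t1(1) lmor_eq_iff by blast+
  have r2: "Rrel g g1" "v = v1*f" using q(2) t(2) t1(2) lmor_eq_iff by blast+
  have E: "f \<in> Eset" "f1 \<in> Eset" using t t1 by (auto simp: Rtrip_iff)
  have ff: "f*f1 = f1" using r1(2) E by (auto simp: Rrel_E)
  have uu: "f1*u1 = u1" using t1 by (auto simp: Rtrip_iff)
  have fu: "f*u1 = u1" using ff uu by (metis mult.assoc)
  have fu2: "f*(u1*e) = u1*e" using fu by (simp add: mult.assoc[symmetric])
  have "v*u = (v1*u1)*e" using r1(3) r2(2) fu2 by (simp add: mult.assoc)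
  moreover have "(e, v*u, g) \<in> Rtrip" "(e1, v1*u1, g1) \<in> Rtrip" using t t1
    by (auto simp: Rtrip_iff) (metis mult.assoc)+
  ultimately show "k = lmor e (v*u) g" using k r1 r2 lmor_eqI by metis
qed

lemma Rincl_eq: "e \<in> Eset \<Longrightarrow> f \<in> Eset \<Longrightarrow> f*e = e \<Longrightarrow> Rincl (Rcls e) (Rcls f) = lmor e e f"
  unfolding Rincl_def
  apply (rule some_equality)
   apply blast
  apply clarify
  apply (rule lmor_eqI)
  by (auto simp: Rtrip_iff E_iff Rcls_eq Rrel_E)

lemma Rsub_repr:
  assumes e: "e \<in> Eset"
  shows "Rsub d (Rcls e) \<longleftrightarrow> (\<exists>k\<in>Eset. d = Rcls k \<and> e*k = k)"
proof
  assume "Rsub d (Rcls e)"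
  then obtain k f where k: "k \<in> Eset" "f \<in> Eset" "d = Rcls k" "Rcls e = Rcls f" "f*k = k"
    by (auto simp: Rsub_def)
  have "e*f = f" using k e Rcls_eq Rrel_E by blast
  then have "e*k = k" using k(5) by (metis mult.assoc)
  then show "\<exists>k\<in>Eset. d = Rcls k \<and> e*k = k" using k by blast
next
  assume "\<exists>k\<in>Eset. d = Rcls k \<and> e*k = k"
  then show "Rsub d (Rcls e)" using e by (auto simp: Rsub_def)
qed




lemma Zs_rcone: "e \<in> Eset \<Longrightarrow> Zs e e b = {w. e*w = w \<and> w*b = w}"
  unfolding Zs_def by (auto, metis)

lemma GA_rcone: "e \<in> Eset \<Longrightarrow> Lrel e e \<and> apex (Dh e e) = Lcls e"
  using apex_rcone rcone_Dh Lrel_refl by metis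

lemma Hset_rcone:
  assumes reg: "\<forall>a::'a::semigroup_mult. \<exists>x. a*x*a = a" and e: "e \<in> Eset" "b \<in> Eset"
  shows "Hset (rcone (e::'a)) (Lcls b) = D ` {w. e*w = w \<and> w*b = w}"
  using Hset_Dh[OF reg e(1) _ _ e(2)] GA_rcone[OF e(1)] by (simp add: rcone_Dh Zs_rcone e)

lemma Hmap_rcone:
  assumes reg: "\<forall>a::'a::semigroup_mult. \<exists>x. a*x*a = a" and e: "e \<in> Eset"
    and t: "(b,v,b') \<in> Ltrip" and w: "e*w = w" "w*(b::'a) = w"
  shows "Hmap (rcone e) (rmor b v b') (D w) = D (w*v)"
proof -
  have z: "w \<in> Zs e e b" using w e by (simp add: Zs_rcone)
  show ?thesis using Hmap_Dh[OF reg e Lrel_refl _ t z] GA_rcone[OF e] by (simp add: rcone_Dh)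
qed

lemma Hfun_eq:
  assumes reg: "\<forall>a::'a::semigroup_mult. \<exists>x. a*x*a = a"
    and a: "a \<in> Eset" "Lrel a (y::'a)" "apex (Dh y a) = Lcls a"
    and a': "a' \<in> Eset" "Lrel a' y'" "apex (Dh y' a') = Lcls a'"
    and Z: "\<And>b. b \<in> Eset \<Longrightarrow> Zs y a b = Zs y' a' b"
  shows "Hfun (Dh y a) = Hfun (Dh y' a')"
proof -
  have HS: "Hset (Dh y a) c = Hset (Dh y' a') c" if c: "c \<in> Lobj" for c
  proof -
    obtain b where b: "b \<in> Eset" "c = Lcls b" using Lobj_E c by blast
    show ?thesis using Hset_Dh[OF reg a b(1)] Hset_Dh[OF reg a' b(1)] Z[OF b(1)] b(2) by simp
  qed
  have HM: "Hmap (Dh y a) g = Hmap (Dh y' a') g" if g: "g \<in> Lmors" for g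
  proof
    fix x
    obtain c d where gh: "g \<in> Lhom c d" using g Lmors_iff by blast
    then obtain b v b' where t: "(b,v,b') \<in> Ltrip" and gg: "g = rmor b v b'" and cb: "c = Lcls b"
      using Lhom_mem[of g c d] by blast
    have dom: "Ldom g = Lcls b" using Ldom_eq[OF gh] cb by simp
    have bE: "b \<in> Eset" using t by (simp add: Ltrip_iff)
    show "Hmap (Dh y a) g x = Hmap (Dh y' a') g x"
    proof (cases "x \<in> Hset (Dh y a) (Lcls b)")
      case True
      then obtain z where z: "z \<in> Zs y a b" "x = D z" using Hset_Dh[OF reg a bE] by auto
      have z': "z \<in> Zs y' a' b" using z Z[OF bE] by simp
      show ?thesis using Hmap_Dh[OF reg a t z(1)] Hmap_Dh[OF reg a' t z'] z(2) gg by simp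
    next
      case False
      then have "x \<notin> Hset (Dh y' a') (Lcls b)" using HS[OF Lcls_Lobj[OF bE]] by simp
      then show ?thesis using False Hmap_out dom by metis
    qed
  qed
  show ?thesis unfolding Hfun_def
    by (simp add: HS HM cong: restrict_cong)
qed

lemma Hfun_rcone_R:
  assumes reg: "\<forall>a::'a::semigroup_mult. \<exists>x. a*x*a = a"
    and e: "e \<in> Eset" "e' \<in> Eset" "Rrel e (e'::'a)"
  shows "Hfun (rcone e) = Hfun (rcone e')"
proof -
  have ee: "e'*e = e" "e*e' = e'" using e by (auto simp: Rrel_E)
  have "\<And>w. e*w = w \<longleftrightarrow> e'*w = w" using ee by (metis mult.assoc)
  then have "\<And>b. Zs e e b = Zs e' e' b" using e by (simp add: Zs_rcone)
  then show ?thesis unfolding rcone_Dh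
    using Hfun_eq[OF reg] GA_rcone e by blast
qed

lemma Gamma_obj_eq:
  assumes reg: "\<forall>a::'a::semigroup_mult. \<exists>x. a*x*a = a" and e: "e \<in> Eset"
  shows "Gamma_obj (Rcls (e::'a)) = Hfun (rcone e)"
  unfolding Gamma_obj_def
proof (rule some_equality)
  show "\<exists>e'\<in>Eset. Rcls e = Rcls e' \<and> Hfun (rcone e) = Hfun (rcone e')" using e by blast
next
  fix F assume "\<exists>e'\<in>Eset. Rcls e = Rcls e' \<and> F = Hfun (rcone e')"
  then obtain e' where "e' \<in> Eset" "Rcls e = Rcls e'" "F = Hfun (rcone e')" by blast
  then show "F = Hfun (rcone e)" using Hfun_rcone_R[OF reg e] Rcls_eq e by metis
qed

lemma eta_rcone:
  assumes reg: "\<forall>a::'a::semigroup_mult. \<exists>x. a*x*a = a"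
    and e: "e \<in> Eset" "b \<in> Eset" and w: "e*w = w" "w*b = (w::'a)"
  shows "eta (rcone e) (Lcls b) (D w) = rmor e w b"
  unfolding eta_def apex_rcone[OF e(1)]
proof (rule some_equality)
  have "cone_star (rcone e) (Lepi (rmor e w b)) = D w"
    using cs_Lepi[OF reg e(1) Lrel_refl e(2) w] w by (simp add: rcone_Dh)
  moreover have "rmor e w b \<in> Lhom (Lcls e) (Lcls b)" using Lhom_repr[OF e] w by blast
  ultimately show "rmor e w b \<in> Lhom (Lcls e) (Lcls b) \<and> D w = cone_star (rcone e) (Lepi (rmor e w b))"
    by simp
next
  fix f assume f: "f \<in> Lhom (Lcls e) (Lcls b) \<and> D w = cone_star (rcone e) (Lepi f)"
  then obtain w' where w': "e*w' = w'" "w'*b = w'" "f = rmor e w' b" using Lhom_repr[OF e] by blast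
  have "cone_star (rcone e) (Lepi (rmor e w' b)) = D w'"
    using cs_Lepi[OF reg e(1) Lrel_refl e(2) w'(1,2)] w' by (simp add: rcone_Dh)
  then have "D w = D w'" using f w' by simp
  then have "w = w'" using D_inj2[OF reg _ e(1)] w w' by blast
  then show "f = rmor e w b" using w' by simp
qed

lemma GF_in: "c \<in> Lobj \<Longrightarrow> x \<in> Hset (rcone e) c \<Longrightarrow>
   Gamma_formula e u f c x = cone_star (rcone f) (Lepi (Lcomp (rmor f u e) (eta (rcone e) c x)))"
  by (simp add: Gamma_formula_def)

lemma GF_ext1: "Gamma_formula e u f \<in> extensional Lobj"
  by (simp add: Gamma_formula_def)

lemma GF_ext2: "c \<in> Lobj \<Longrightarrow> Gamma_formula e u f c \<in> extensional (Hset (rcone e) c)"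
  by (simp add: Gamma_formula_def)

lemma GF_val:
  assumes reg: "\<forall>a::'a::semigroup_mult. \<exists>x. a*x*a = a"
    and t: "(e,u,f) \<in> Rtrip" and b: "b \<in> Eset" and w: "e*w = w" "w*b = (w::'a)"
  shows "Gamma_formula e u f (Lcls b) (D w) = D (u*w)"
proof -
  have E: "e \<in> Eset" "f \<in> Eset" "f*u = u" "u*e = u" using t by (auto simp: Rtrip_iff)
  have xin: "D w \<in> Hset (rcone e) (Lcls b)" using Hset_rcone[OF reg E(1) b] w by auto
  have t1: "(f,u,e) \<in> Ltrip" "(e,w,b) \<in> Ltrip" using E b w by (auto simp: Ltrip_iff)
  have uw: "f*(u*w) = u*w" "(u*w)*b = u*w" using E w by (simp_all add: mult.assoc[symmetric]) (simp add: mult.assoc)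
  have "Gamma_formula e u f (Lcls b) (D w) = cone_star (rcone f) (Lepi (Lcomp (rmor f u e) (rmor e w b)))"
    using GF_in[OF Lcls_Lobj[OF b] xin] eta_rcone[OF reg E(1) b w] by simp
  also have "\<dots> = cone_star (rcone f) (Lepi (rmor f (u*w) b))" using Lcomp_rmor[OF t1] by simp
  also have "\<dots> = D (f*(u*w))" unfolding rcone_Dh by (rule cs_Lepi[OF reg E(2) Lrel_refl b uw])
  finally show ?thesis using uw by simp
qed

lemma GF_cong:
  assumes reg: "\<forall>a::'a::semigroup_mult. \<exists>x. a*x*a = a"
    and t: "(e,u,f) \<in> Rtrip" "(e',u',f') \<in> Rtrip" and eq: "lmor e u f = lmor e' u' (f'::'a)"
  shows "Gamma_formula e u f = Gamma_formula e' u' f'"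
proof -
  have r: "Rrel e e'" "Rrel f f'" "u = u'*e" using lmor_eq_iff[OF t] eq by blast+
  have E: "e \<in> Eset" "e' \<in> Eset" using t by (auto simp: Rtrip_iff)
  have ee: "e'*e = e" "e*e' = e'" using r E by (auto simp: Rrel_E)
  have we: "\<And>w. e*w = w \<longleftrightarrow> e'*w = w" using ee by (metis mult.assoc)
  show ?thesis
  proof (rule extensionalityI[OF GF_ext1 GF_ext1])
    fix c :: "'a set" assume c: "c \<in> Lobj"
    then obtain b where b: "b \<in> Eset" "c = Lcls b" using Lobj_E by blast
    have HS: "Hset (rcone e) c = Hset (rcone e') c" using Hset_rcone[OF reg E(1) b(1)]
      Hset_rcone[OF reg E(2) b(1)] we b(2) by simp
    show "Gamma_formula e u f c = Gamma_formula e' u' f' c"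
    proof (rule extensionalityI[OF GF_ext2[OF c]])
      show "Gamma_formula e' u' f' c \<in> extensional (Hset (rcone e) c)" using GF_ext2[OF c] HS by simp
      fix x assume "x \<in> Hset (rcone e) c"
      then obtain w where w: "e*w = w" "w*b = w" "x = D w" using Hset_rcone[OF reg E(1) b(1)] b(2) by auto
      have w': "e'*w = w" using w we by blast
      have "u*w = u'*w" using r(3) w(1) by (metis mult.assoc)
      then show "Gamma_formula e u f c x = Gamma_formula e' u' f' c x"
        using GF_val[OF reg t(1) b(1) w(1,2)] GF_val[OF reg t(2) b(1) w' w(2)] w(3) b(2) by simp
    qed
  qed
qed

lemma Gamma_mor_eq:
  assumes reg: "\<forall>a::'a::semigroup_mult. \<exists>x. a*x*a = a" and t: "(e,u,f) \<in> Rtrip"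
  shows "Gamma_mor (lmor e u (f::'a)) = Gamma_formula e u f"
  unfolding Gamma_mor_def
proof (rule some_equality)
  show "\<exists>e' u' f'. (e', u', f') \<in> Rtrip \<and> lmor e u f = lmor e' u' f' \<and> Gamma_formula e u f = Gamma_formula e' u' f'"
    using t by blast
next
  fix \<tau> assume "\<exists>e' u' f'. (e', u', f') \<in> Rtrip \<and> lmor e u f = lmor e' u' f' \<and> \<tau> = Gamma_formula e' u' f'"
  then show "\<tau> = Gamma_formula e u f" using GF_cong[OF reg t] by metis
qed




lemma Hfun_fst: "c \<in> Lobj \<Longrightarrow> fst (Hfun \<gamma>) c = Hset \<gamma> c"
  by (simp add: Hfun_def)

lemma Hfun_snd: "g \<in> Lmors \<Longrightarrow> snd (Hfun \<gamma>) g = Hmap \<gamma> g"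
  by (simp add: Hfun_def)

lemma NLhom_iff: "\<tau> \<in> NLhom F G \<longleftrightarrow> \<tau> \<in> extensional Lobj \<and>
     (\<forall>c \<in> Lobj. \<tau> c \<in> extensional (fst F c) \<and> \<tau> c ` fst F c \<subseteq> fst G c) \<and>
     (\<forall>c \<in> Lobj. \<forall>d \<in> Lobj. \<forall>g \<in> Lhom c d. \<forall>x \<in> fst F c.
         snd G g (\<tau> c x) = \<tau> d (snd F g x))"
  by (simp add: NLhom_def)

lemma GF_NLhom:
  assumes reg: "\<forall>a::'a::semigroup_mult. \<exists>x. a*x*a = a" and t: "(e,u,f) \<in> Rtrip"
  shows "Gamma_formula e u (f::'a) \<in> NLhom (Hfun (rcone e)) (Hfun (rcone f))"
proof -
  have E: "e \<in> Eset" "f \<in> Eset" "f*u = u" "u*e = u" using t by (auto simp: Rtrip_iff)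
  have A: "\<forall>c \<in> Lobj. Gamma_formula e u f c \<in> extensional (fst (Hfun (rcone e)) c) \<and>
      Gamma_formula e u f c ` fst (Hfun (rcone e)) c \<subseteq> fst (Hfun (rcone f)) c"
  proof
    fix c :: "'a set" assume c: "c \<in> Lobj"
    then obtain b where b: "b \<in> Eset" "c = Lcls b" using Lobj_E by blast
    have "Gamma_formula e u f c ` Hset (rcone e) c \<subseteq> Hset (rcone f) c"
    proof
      fix z assume "z \<in> Gamma_formula e u f c ` Hset (rcone e) c"
      then obtain w where w: "e*w = w" "w*b = w" "z = Gamma_formula e u f c (D w)"
        using Hset_rcone[OF reg E(1) b(1)] b(2) by auto
      have "z = D (u*w)" using GF_val[OF reg t b(1) w(1,2)] w(3) b(2) by simp
      moreover have "f*(u*w) = u*w" "(u*w)*b = u*w" using E w by (simp_all add: mult.assoc[symmetric]) (simp add: mult.assoc)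
      ultimately show "z \<in> Hset (rcone f) c" using Hset_rcone[OF reg E(2) b(1)] b(2) by auto
    qed
    then show "Gamma_formula e u f c \<in> extensional (fst (Hfun (rcone e)) c) \<and>
      Gamma_formula e u f c ` fst (Hfun (rcone e)) c \<subseteq> fst (Hfun (rcone f)) c"
      using GF_ext2[OF c] c by (simp add: Hfun_fst)
  qed
  have B: "\<forall>c \<in> Lobj. \<forall>d \<in> Lobj. \<forall>g \<in> Lhom c d. \<forall>x \<in> fst (Hfun (rcone e)) c.
         snd (Hfun (rcone f)) g (Gamma_formula e u f c x) = Gamma_formula e u f d (snd (Hfun (rcone e)) g x)"
  proof (intro ballI)
    fix c d :: "'a set" and g x assume c: "c \<in> Lobj" and d: "d \<in> Lobj" and g: "g \<in> Lhom c d"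
      and x: "x \<in> fst (Hfun (rcone e)) c"
    obtain b v b' where tb: "(b,v,b') \<in> Ltrip" and cb: "c = Lcls b" and db: "d = Lcls b'" and gg: "g = rmor b v b'"
      using Lhom_mem[of g c d] g by blast
    have bE: "b \<in> Eset" "b' \<in> Eset" "v*b' = v" using tb by (auto simp: Ltrip_iff)
    have gm: "g \<in> Lmors" using g Lmors_iff by blast
    obtain w where w: "e*w = w" "w*b = w" "x = D w"
      using x Hset_rcone[OF reg E(1) bE(1)] cb c by (auto simp: Hfun_fst)
    have uw: "f*(u*w) = u*w" "(u*w)*b = u*w" using E w by (simp_all add: mult.assoc[symmetric]) (simp add: mult.assoc)
    have wv: "e*(w*v) = w*v" "(w*v)*b' = w*v" using w bE by (simp_all add: mult.assoc[symmetric]) (simp add: mult.assoc)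
    have "snd (Hfun (rcone f)) g (Gamma_formula e u f c x) = Hmap (rcone f) g (D (u*w))"
      using GF_val[OF reg t bE(1) w(1,2)] w(3) cb gm by (simp add: Hfun_snd)
    also have "\<dots> = D (u*w*v)" using Hmap_rcone[OF reg E(2) tb uw] gg by simp
    also have "\<dots> = Gamma_formula e u f d (D (w*v))"
      using GF_val[OF reg t bE(2) wv] db by (simp add: mult.assoc)
    also have "D (w*v) = snd (Hfun (rcone e)) g x"
      using Hmap_rcone[OF reg E(1) tb w(1,2)] gg gm w(3) by (simp add: Hfun_snd)
    finally show "snd (Hfun (rcone f)) g (Gamma_formula e u f c x) = Gamma_formula e u f d (snd (Hfun (rcone e)) g x)" .
  qed
  show ?thesis unfolding NLhom_iff using GF_ext1 A B by blast
qed

lemma GF_id_on: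
  assumes reg: "\<forall>a::'a::semigroup_mult. \<exists>x. a*x*a = a" and t: "(e,k,f) \<in> Rtrip" and ek: "\<And>w. e*w = w \<Longrightarrow> k*w = w"
    and c: "c \<in> Lobj" and x: "x \<in> Hset (rcone e) c"
  shows "Gamma_formula e k (f::'a) c x = x"
proof -
  have E: "e \<in> Eset" using t by (simp add: Rtrip_iff)
  obtain b where b: "b \<in> Eset" "c = Lcls b" using Lobj_E c by blast
  obtain w where w: "e*w = w" "w*b = w" "x = D w" using x Hset_rcone[OF reg E b(1)] b(2) by auto
  show ?thesis using GF_val[OF reg t b(1) w(1,2)] w ek b(2) by simp
qed

lemma GF_incl:
  assumes reg: "\<forall>a::'a::semigroup_mult. \<exists>x. a*x*a = a" and k: "k \<in> Eset" "f \<in> Eset" "f*k = (k::'a)"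
  shows "NLis_incl (Hfun (rcone k)) (Hfun (rcone f)) (Gamma_formula k k f)"
proof -
  have t: "(k,k,f) \<in> Rtrip" using k by (simp add: Rtrip_iff E_iff)
  show ?thesis unfolding NLis_incl_def
    using GF_NLhom[OF reg t] GF_id_on[OF reg t] by (simp add: Hfun_fst)
qed

lemma GF_id:
  assumes reg: "\<forall>a::'a::semigroup_mult. \<exists>x. a*x*a = a" and e: "e \<in> Eset"
  shows "Gamma_formula e e (e::'a) = NLid (Hfun (rcone e))"
proof -
  have t: "(e,e,e) \<in> Rtrip" using e by (simp add: Rtrip_iff E_iff)
  show ?thesis
  proof (rule extensionalityI[OF GF_ext1])
    show "NLid (Hfun (rcone e)) \<in> extensional Lobj" by (simp add: NLid_def)
    fix c :: "'a set" assume c: "c \<in> Lobj"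
    show "Gamma_formula e e e c = NLid (Hfun (rcone e)) c"
    proof (rule extensionalityI[OF GF_ext2[OF c]])
      show "NLid (Hfun (rcone e)) c \<in> extensional (Hset (rcone e) c)" using c by (simp add: NLid_def Hfun_fst)
      fix x assume "x \<in> Hset (rcone e) c"
      then show "Gamma_formula e e e c x = NLid (Hfun (rcone e)) c x"
        using GF_id_on[OF reg t _ c] c by (simp add: NLid_def Hfun_fst)
    qed
  qed
qed

lemma GF_comp:
  assumes reg: "\<forall>a::'a::semigroup_mult. \<exists>x. a*x*a = a" and t: "(e,u,f) \<in> Rtrip" "(f,v,g) \<in> Rtrip"
  shows "Gamma_formula e (v*u) (g::'a) = NLcomp (Hfun (rcone e)) (Gamma_formula e u f) (Gamma_formula f v g)"
proof -
  have E: "e \<in> Eset" "f \<in> Eset" "f*u = u" "u*e = u" using t by (auto simp: Rtrip_iff)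
  have t2: "(e, v*u, g) \<in> Rtrip" using t by (auto simp: Rtrip_iff) (metis mult.assoc)+
  show ?thesis
  proof (rule extensionalityI[OF GF_ext1])
    show "NLcomp (Hfun (rcone e)) (Gamma_formula e u f) (Gamma_formula f v g) \<in> extensional Lobj"
      by (simp add: NLcomp_def)
    fix c :: "'a set" assume c: "c \<in> Lobj"
    obtain b where b: "b \<in> Eset" "c = Lcls b" using Lobj_E c by blast
    show "Gamma_formula e (v*u) g c = NLcomp (Hfun (rcone e)) (Gamma_formula e u f) (Gamma_formula f v g) c"
    proof (rule extensionalityI[OF GF_ext2[OF c]])
      show "NLcomp (Hfun (rcone e)) (Gamma_formula e u f) (Gamma_formula f v g) c \<in> extensional (Hset (rcone e) c)"
        using c by (simp add: NLcomp_def Hfun_fst)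
      fix x assume "x \<in> Hset (rcone e) c"
      then obtain w where w: "e*w = w" "w*b = w" "x = D w" using Hset_rcone[OF reg E(1) b(1)] b(2) by auto
      have uw: "f*(u*w) = u*w" "(u*w)*b = u*w" using E w by (simp_all add: mult.assoc[symmetric]) (simp add: mult.assoc)
      have "NLcomp (Hfun (rcone e)) (Gamma_formula e u f) (Gamma_formula f v g) c x
          = Gamma_formula f v g c (Gamma_formula e u f c x)"
        using c \<open>x \<in> Hset (rcone e) c\<close> by (simp add: NLcomp_def Hfun_fst)
      also have "\<dots> = D (v*(u*w))" using GF_val[OF reg t(1) b(1) w(1,2)] GF_val[OF reg t(2) b(1) uw] w(3) b(2) by simp
      also have "\<dots> = Gamma_formula e (v*u) g c x" using GF_val[OF reg t2 b(1) w(1,2)] w(3) b(2) by (simp add: mult.assoc)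
      finally show "Gamma_formula e (v*u) g c x = NLcomp (Hfun (rcone e)) (Gamma_formula e u f) (Gamma_formula f v g) c x" by simp
    qed
  qed
qed




lemma FF:
  assumes reg: "\<forall>a::'a::semigroup_mult. \<exists>x. a*x*a = a" and E: "e \<in> Eset" "f \<in> Eset"
  shows "bij_betw Gamma_mor (Rhom (Rcls e) (Rcls (f::'a))) (NLhom (Hfun (rcone e)) (Hfun (rcone f)))"
  unfolding bij_betw_def
proof (intro conjI)
  have ee: "e*e = e" using E by (simp add: E_iff)
  have De: "D e \<in> Hset (rcone e) (Lcls e)" using Hset_rcone[OF reg E(1) E(1)] ee by auto
  show "inj_on Gamma_mor (Rhom (Rcls e) (Rcls f))"
  proof (rule inj_onI)
    fix m1 m2 assume m1: "m1 \<in> Rhom (Rcls e) (Rcls f)" and m2: "m2 \<in> Rhom (Rcls e) (Rcls f)"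
      and eq: "Gamma_mor m1 = Gamma_mor m2"
    obtain u1 where u1: "f*u1 = u1" "u1*e = u1" "m1 = lmor e u1 f" using m1 Rhom_repr[OF E] by blast
    obtain u2 where u2: "f*u2 = u2" "u2*e = u2" "m2 = lmor e u2 f" using m2 Rhom_repr[OF E] by blast
    have t1: "(e,u1,f) \<in> Rtrip" "(e,u2,f) \<in> Rtrip" using E u1 u2 by (auto simp: Rtrip_iff)
    have "Gamma_formula e u1 f = Gamma_formula e u2 f"
      using eq u1(3) u2(3) Gamma_mor_eq[OF reg t1(1)] Gamma_mor_eq[OF reg t1(2)] by simp
    then have "Gamma_formula e u1 f (Lcls e) (D e) = Gamma_formula e u2 f (Lcls e) (D e)" by simp
    then have "D (u1*e) = D (u2*e)" using GF_val[OF reg t1(1) E(1) ee ee] GF_val[OF reg t1(2) E(1) ee ee] by simp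
    then have "u1 = u2" using D_inj2[OF reg _ E(2)] u1 u2 by simp
    then show "m1 = m2" using u1 u2 by simp
  qed
  show "Gamma_mor ` Rhom (Rcls e) (Rcls f) = NLhom (Hfun (rcone e)) (Hfun (rcone f))"
  proof
    show "Gamma_mor ` Rhom (Rcls e) (Rcls f) \<subseteq> NLhom (Hfun (rcone e)) (Hfun (rcone f))"
    proof
      fix \<tau> assume "\<tau> \<in> Gamma_mor ` Rhom (Rcls e) (Rcls f)"
      then obtain m where m: "m \<in> Rhom (Rcls e) (Rcls f)" "\<tau> = Gamma_mor m" by blast
      obtain u where u0: "f*u = u" "u*e = u" "m = lmor e u f" using m(1) Rhom_repr[OF E] by blast
      have u: "f*u = u" "u*e = u" "\<tau> = Gamma_mor (lmor e u f)" using u0 m(2) by simp_all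
      have t: "(e,u,f) \<in> Rtrip" using E u by (auto simp: Rtrip_iff)
      show "\<tau> \<in> NLhom (Hfun (rcone e)) (Hfun (rcone f))" using GF_NLhom[OF reg t] Gamma_mor_eq[OF reg t] u(3) by simp
    qed
  next
    show "NLhom (Hfun (rcone e)) (Hfun (rcone f)) \<subseteq> Gamma_mor ` Rhom (Rcls e) (Rcls f)"
    proof
      fix \<tau> assume tau: "\<tau> \<in> NLhom (Hfun (rcone e)) (Hfun (rcone f))"
      note T = tau[unfolded NLhom_iff]
      have T1: "\<tau> \<in> extensional Lobj" using T by blast
      have T2: "\<And>c. c \<in> Lobj \<Longrightarrow> \<tau> c \<in> extensional (fst (Hfun (rcone e)) c) \<and> \<tau> c ` fst (Hfun (rcone e)) c \<subseteq> fst (Hfun (rcone f)) c"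
        using T by blast
      have T3: "\<And>c d g x. c \<in> Lobj \<Longrightarrow> d \<in> Lobj \<Longrightarrow> g \<in> Lhom c d \<Longrightarrow> x \<in> fst (Hfun (rcone e)) c \<Longrightarrow>
         snd (Hfun (rcone f)) g (\<tau> c x) = \<tau> d (snd (Hfun (rcone e)) g x)"
        using T by blast
      have Le: "Lcls e \<in> Lobj" using E by (simp add: Lcls_Lobj)
      have "\<tau> (Lcls e) (D e) \<in> Hset (rcone f) (Lcls e)"
        using T2[OF Le] Le De by (auto simp: Hfun_fst)
      then obtain u where u: "f*u = u" "u*e = u" "\<tau> (Lcls e) (D e) = D u"
        using Hset_rcone[OF reg E(2) E(1)] by auto
      have t: "(e,u,f) \<in> Rtrip" using E u by (auto simp: Rtrip_iff)
      have "\<tau> = Gamma_formula e u f"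
      proof (rule extensionalityI[OF _ GF_ext1])
        show "\<tau> \<in> extensional Lobj" using T1 by blast
        fix c :: "'a set" assume c: "c \<in> Lobj"
        obtain a where a: "a \<in> Eset" "c = Lcls a" using Lobj_E c by blast
        show "\<tau> c = Gamma_formula e u f c"
        proof (rule extensionalityI[OF _ GF_ext2[OF c]])
          show "\<tau> c \<in> extensional (Hset (rcone e) c)" using T2[OF c] c by (simp add: Hfun_fst)
          fix x assume "x \<in> Hset (rcone e) c"
          then obtain y where y: "e*y = y" "y*a = y" "x = D y" using Hset_rcone[OF reg E(1) a(1)] a(2) by auto
          have ty: "(e,y,a) \<in> Ltrip" using E a y by (auto simp: Ltrip_iff)
          have g: "rmor e y a \<in> Lhom (Lcls e) (Lcls a)" using Lhom_repr[OF E(1) a(1)] y by blast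
          have gm: "rmor e y a \<in> Lmors" using g Lmors_iff by blast
          have "snd (Hfun (rcone f)) (rmor e y a) (\<tau> (Lcls e) (D e)) = \<tau> (Lcls a) (snd (Hfun (rcone e)) (rmor e y a) (D e))"
            using T3[OF Le Lcls_Lobj[OF a(1)] g] Le De by (simp add: Hfun_fst)
          moreover have "snd (Hfun (rcone e)) (rmor e y a) (D e) = D y"
            using Hmap_rcone[OF reg E(1) ty ee ee] gm y(1) by (simp add: Hfun_snd)
          moreover have "snd (Hfun (rcone f)) (rmor e y a) (D u) = D (u*y)"
            using Hmap_rcone[OF reg E(2) ty u(1,2)] gm by (simp add: Hfun_snd)
          ultimately have "\<tau> c x = D (u*y)" using u(3) y(3) a(2) by simp
          then show "\<tau> c x = Gamma_formula e u f c x" using GF_val[OF reg t a(1) y(1,2)] y(3) a(2) by simp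
        qed
      qed
      moreover have "lmor e u f \<in> Rhom (Rcls e) (Rcls f)" using Rhom_repr[OF E] u by blast
      moreover have "Gamma_mor (lmor e u f) = \<tau>" using Gamma_mor_eq[OF reg t] calculation(1) by simp
      ultimately show "\<tau> \<in> Gamma_mor ` Rhom (Rcls e) (Rcls f)" by (metis rev_image_eqI)
    qed
  qed
qed

lemma OB_inj_aux:
  assumes reg: "\<forall>a::'a::semigroup_mult. \<exists>x. a*x*a = a" and E: "e \<in> Eset" "k1 \<in> Eset" "k2 \<in> Eset"
    and ek: "e*k1 = k1" "e*k2 = (k2::'a)" and eq: "Hfun (rcone k1) = Hfun (rcone k2)"
  shows "k2*k1 = k1"
proof -
  have L: "Lcls k1 \<in> Lobj" using E by (simp add: Lcls_Lobj)
  have kk: "k1*k1 = k1" using E by (simp add: E_iff)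
  have "D k1 \<in> Hset (rcone k1) (Lcls k1)" using Hset_rcone[OF reg E(2) E(2)] kk by auto
  then have "D k1 \<in> Hset (rcone k2) (Lcls k1)" using eq Hfun_fst[OF L] by metis
  then obtain w where w: "k2*w = w" "w*k1 = w" "D k1 = D w" using Hset_rcone[OF reg E(3) E(2)] by auto
  have "e*k1 = e*w" using D_inj[OF reg w(3) E(1)] .
  moreover have "e*w = w" using ek(2) w(1) by (metis mult.assoc)
  ultimately have "k1 = w" using ek by simp
  then show ?thesis using w by simp
qed

lemma Zs_swap:
  assumes a: "a \<in> Eset" "Lrel a y" and k: "k*y = y" "k = y*x"
  shows "Zs y a b = Zs k k b"
proof
  have ya: "y*a = y" using a by (metis Lrel_idem Lrel_sym)
  have aa: "a*a = a" using a by (simp add: E_iff)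
  show "Zs y a b \<subseteq> Zs k k b"
  proof
    fix z assume "z \<in> Zs y a b"
    then obtain w where w: "z = y*w" "a*w = w" "w*b = w" by (auto simp: Zs_def)
    have "k*z = z" "z*b = z" using w k by (simp_all add: mult.assoc[symmetric]) (simp add: mult.assoc)
    then have "z = k*z \<and> k*z = z \<and> z*b = z" by simp
    then show "z \<in> Zs k k b" unfolding Zs_def by blast
  qed
  show "Zs k k b \<subseteq> Zs y a b"
  proof
    fix z assume "z \<in> Zs k k b"
    then obtain w where w: "z = k*w" "k*w = w" "w*b = w" by (auto simp: Zs_def)
    have z: "k*z = z" "z*b = z" using w by simp_all
    define w' where "w' = a*(x*z)"
    have "a*w' = w'" unfolding w'_def using aa by (simp add: mult.assoc[symmetric])
    moreover have "w'*b = w'" unfolding w'_def using z by (simp add: mult.assoc)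
    moreover have "y*w' = z"
    proof -
      have "y*w' = (y*a)*(x*z)" unfolding w'_def by (simp add: mult.assoc)
      also have "\<dots> = (y*x)*z" using ya by (simp add: mult.assoc)
      also have "\<dots> = z" using k(2) z(1) by simp
      finally show ?thesis .
    qed
    ultimately show "z \<in> Zs y a b" unfolding Zs_def by blast
  qed
qed




lemma gamma_self:
  assumes n: "normal_cone \<gamma> (Lcls a)" and a: "a \<in> Eset"
  shows "\<gamma> \<in> Hset \<gamma> (Lcls (a::'a::semigroup_mult))"
proof -
  have ap: "apex \<gamma> = Lcls a" using apex_eq[OF n] .
  have aa: "a*a = a" using a by (simp add: E_iff)
  have ta: "(a,a,a) \<in> Ltrip" using a aa by (simp add: Ltrip_iff)
  have ep: "Lepi (rmor a a a) = rmor a a a" using Lepi_rmor[OF ta a Lrel_refl] .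
  have ext: "\<gamma> \<in> extensional Lobj" and comp: "\<And>c. c \<in> Lobj \<Longrightarrow> \<gamma> c \<in> Lhom c (Lcls a)"
    using n by (auto simp: normal_cone_def)
  have "cone_star \<gamma> (rmor a a a) = \<gamma>"
  proof (rule cone_ext)
    show "cone_star \<gamma> (rmor a a a) \<in> extensional Lobj" by (simp add: cone_star_def)
    show "\<gamma> \<in> extensional Lobj" by (rule ext)
    fix j :: 'a assume j: "j \<in> Eset"
    obtain w where w: "j*w = w" "w*a = w" "\<gamma> (Lcls j) = rmor j w a"
      using comp[OF Lcls_Lobj[OF j]] Lhom_repr[OF j a] by blast
    have tw: "(j,w,a) \<in> Ltrip" using j a w by (simp add: Ltrip_iff)
    show "cone_star \<gamma> (rmor a a a) (Lcls j) = \<gamma> (Lcls j)"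
      using Lcomp_rmor[OF tw ta] w j by (simp add: cone_star_def Lcls_Lobj mult.assoc[symmetric])
  qed
  moreover have "rmor a a a \<in> Lhom (Lcls a) (Lcls a)" using Lhom_repr[OF a a] aa by blast
  ultimately have "\<gamma> = cone_star \<gamma> (Lepi (rmor a a a)) \<and> rmor a a a \<in> Lhom (Lcls a) (Lcls a)"
    using ep by simp
  then show ?thesis unfolding Hset_def ap by blast
qed

lemma OB:
  assumes reg: "\<forall>a::'a::semigroup_mult. \<exists>x. a*x*a = a" and e: "e \<in> Eset"
  shows "bij_betw Gamma_obj {d \<in> Robj. Rsub d (Rcls e)} {G \<in> NLobj. NLsub G (Gamma_obj (Rcls (e::'a)))}"
  unfolding bij_betw_def
proof (intro conjI)
  have Ge: "Gamma_obj (Rcls e) = Hfun (rcone e)" using Gamma_obj_eq[OF reg e] .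
  show "inj_on Gamma_obj {d \<in> Robj. Rsub d (Rcls e)}"
  proof (rule inj_onI)
    fix d1 d2 assume d1: "d1 \<in> {d \<in> Robj. Rsub d (Rcls e)}" and d2: "d2 \<in> {d \<in> Robj. Rsub d (Rcls e)}"
      and eq: "Gamma_obj d1 = Gamma_obj d2"
    obtain k1 where k1: "k1 \<in> Eset" "d1 = Rcls k1" "e*k1 = k1" using d1 Rsub_repr[OF e] by blast
    obtain k2 where k2: "k2 \<in> Eset" "d2 = Rcls k2" "e*k2 = k2" using d2 Rsub_repr[OF e] by blast
    have H: "Hfun (rcone k1) = Hfun (rcone k2)" using eq k1 k2 Gamma_obj_eq[OF reg] by metis
    have "k2*k1 = k1" using OB_inj_aux[OF reg e k1(1) k2(1) k1(3) k2(3) H] .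
    moreover have "k1*k2 = k2" using OB_inj_aux[OF reg e k2(1) k1(1) k2(3) k1(3) H[symmetric]] .
    ultimately have "Rrel k1 k2" using k1 k2 by (simp add: Rrel_E)
    then show "d1 = d2" using k1 k2 Rcls_eq by blast
  qed
  show "Gamma_obj ` {d \<in> Robj. Rsub d (Rcls e)} = {G \<in> NLobj. NLsub G (Gamma_obj (Rcls e))}"
  proof
    show "Gamma_obj ` {d \<in> Robj. Rsub d (Rcls e)} \<subseteq> {G \<in> NLobj. NLsub G (Gamma_obj (Rcls e))}"
    proof
      fix G assume "G \<in> Gamma_obj ` {d \<in> Robj. Rsub d (Rcls e)}"
      then obtain d where d: "d \<in> Robj" "Rsub d (Rcls e)" "G = Gamma_obj d" by blast
      obtain k where k: "k \<in> Eset" "d = Rcls k" "e*k = k" using d(2) Rsub_repr[OF e] by blast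
      have G: "G = Hfun (rcone k)" using d(3) k Gamma_obj_eq[OF reg] by simp
      have "G \<in> NLobj" unfolding NLobj_def is_normal_cone_def using G rcone_normal[OF k(1)] by blast
      moreover have "NLsub G (Gamma_obj (Rcls e))" unfolding NLsub_def Ge G
        using GF_incl[OF reg k(1) e k(3)] by blast
      ultimately show "G \<in> {G \<in> NLobj. NLsub G (Gamma_obj (Rcls e))}" by blast
    qed
  next
    show "{G \<in> NLobj. NLsub G (Gamma_obj (Rcls e))} \<subseteq> Gamma_obj ` {d \<in> Robj. Rsub d (Rcls e)}"
    proof
      fix G assume "G \<in> {G \<in> NLobj. NLsub G (Gamma_obj (Rcls e))}"
      then obtain \<gamma> \<tau> d0 where G: "G = Hfun \<gamma>" and n: "normal_cone \<gamma> d0" and inc: "NLis_incl G (Hfun (rcone e)) \<tau>"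
        unfolding NLobj_def is_normal_cone_def NLsub_def Ge by blast
      obtain a where a: "a \<in> Eset" "d0 = Lcls a" using n Lobj_E by (auto simp: normal_cone_def)
      have na: "normal_cone \<gamma> (Lcls a)" using n a by simp
      have La: "Lcls a \<in> Lobj" using a Lcls_Lobj by blast
      have gs: "\<gamma> \<in> Hset \<gamma> (Lcls a)" using gamma_self[OF na a(1)] .
      have I2: "\<forall>c\<in>Lobj. \<tau> c ` fst G c \<subseteq> fst (Hfun (rcone e)) c" and I3: "\<forall>c\<in>Lobj. \<forall>x\<in>fst G c. \<tau> c x = x"
        using inc unfolding NLis_incl_def NLhom_iff by blast+
      have i2: "\<tau> (Lcls a) ` Hset \<gamma> (Lcls a) \<subseteq> Hset (rcone e) (Lcls a)"
      proof -
        have "\<tau> (Lcls a) ` fst (Hfun \<gamma>) (Lcls a) \<subseteq> fst (Hfun (rcone e)) (Lcls a)" using I2 La G by blast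
        then show ?thesis using Hfun_fst[OF La] by simp
      qed
      have i3: "\<tau> (Lcls a) \<gamma> = \<gamma>"
      proof -
        have "\<gamma> \<in> fst (Hfun \<gamma>) (Lcls a)" using gs Hfun_fst[OF La] by simp
        then show ?thesis using I3 La G by blast
      qed
      have "\<tau> (Lcls a) \<gamma> \<in> Hset (rcone e) (Lcls a)" using i2 gs by blast
      then have "\<gamma> \<in> Hset (rcone e) (Lcls a)" using i3 by simp
      then obtain y where y: "e*y = y" "y*a = y" "\<gamma> = D y" using Hset_rcone[OF reg e a(1)] by auto
      have hy: "hL y \<in> Eset" "Lrel (hL y) y" using hL[OF reg] by blast+
      have "\<gamma> (Lcls a) \<in> Lhom (Lcls a) (Lcls a)" using na La by (simp add: normal_cone_def)
      moreover have "\<gamma> (Lcls a) \<in> Lhom (Lcls a) (Lcls (hL y))"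
      proof -
        have "y * hL y = y" using hy by (meson Lrel_idem Lrel_sym)
        then have "a*(a*y) = a*y" "(a*y)*hL y = a*y" using a by (simp_all add: E_left mult.assoc)
        then show ?thesis using y(3) D_val[OF reg a(1)] Lhom_repr[OF a(1) hy(1)] by auto
      qed
      ultimately have "Lcls (hL y) = Lcls a" using Lhom_unique by blast
      then have "Lrel a y" using hy a Lcls_eq by (meson Lrel_sym Lrel_trans)
      then have gD: "\<gamma> = Dh y a" using D_eq[OF reg a(1)] y(3) by simp
      obtain k x where k: "k \<in> Eset" "Rrel k y" "k*y = y" "k = y*x" using reg_R[OF reg, of y] by blast
      have ek: "e*k = k" using k(4) y(1) by (simp add: mult.assoc[symmetric])
      have "Hfun (Dh y a) = Hfun (Dh k k)"
        using Hfun_eq[OF reg a(1) \<open>Lrel a y\<close> _ k(1) Lrel_refl] apex_eq[OF na] gD GA_rcone[OF k(1)]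
          Zs_swap[OF a(1) \<open>Lrel a y\<close> k(3,4)] by simp
      then have "G = Gamma_obj (Rcls k)" using G gD Gamma_obj_eq[OF reg k(1)] by (simp add: rcone_Dh)
      moreover have "Rcls k \<in> {d \<in> Robj. Rsub d (Rcls e)}" using k(1) ek Rsub_repr[OF e] Rcls_Robj by blast
      ultimately show "G \<in> Gamma_obj ` {d \<in> Robj. Rsub d (Rcls e)}" by blast
    qed
  qed
qed

theorem mainTheorem17:
  fixes T :: "'a::semigroup_mult itself"
  assumes "regular_semigroup T"
  shows
    \<comment> \<open>Gamma_G is well defined by the given formulas\<close>
    "(\<forall>e \<in> (Eset :: 'a set). Gamma_obj (Rcls e) = Hfun (rcone e))
   \<and> (\<forall>(e, u, f) \<in> (Rtrip :: ('a \<times> 'a \<times> 'a) set). Gamma_mor (lmor e u f) = Gamma_formula e u f)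
    \<comment> \<open>Gamma_G is a functor R_G \<rightarrow> N*L_G\<close>
   \<and> (\<forall>c \<in> (Robj :: 'a set set). Gamma_obj c \<in> NLobj)
   \<and> (\<forall>c \<in> (Robj :: 'a set set). \<forall>d \<in> Robj. \<forall>m \<in> Rhom c d.
        Gamma_mor m \<in> NLhom (Gamma_obj c) (Gamma_obj d))
   \<and> (\<forall>e \<in> (Eset :: 'a set). Gamma_mor (lmor e e e) = NLid (Gamma_obj (Rcls e)))
   \<and> (\<forall>c \<in> (Robj :: 'a set set). \<forall>d \<in> Robj. \<forall>d' \<in> Robj. \<forall>m \<in> Rhom c d. \<forall>n \<in> Rhom d d'.
        Gamma_mor (Rcomp m n) = NLcomp (Gamma_obj c) (Gamma_mor m) (Gamma_mor n))
    \<comment> \<open>local isomorphism: inclusion preserving\<close>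
   \<and> (\<forall>c \<in> (Robj :: 'a set set). \<forall>d \<in> Robj. Rsub c d \<longrightarrow>
        NLis_incl (Gamma_obj c) (Gamma_obj d) (Gamma_mor (Rincl c d)))
    \<comment> \<open>fully faithful\<close>
   \<and> (\<forall>c \<in> (Robj :: 'a set set). \<forall>d \<in> Robj.
        bij_betw Gamma_mor (Rhom c d) (NLhom (Gamma_obj c) (Gamma_obj d)))
    \<comment> \<open>restriction to each ideal is bijective on objects onto the ideal of the image\<close>
   \<and> (\<forall>c \<in> (Robj :: 'a set set).
        bij_betw Gamma_obj {d \<in> Robj. Rsub d c} {G \<in> NLobj. NLsub G (Gamma_obj c)})"
proof -
  have reg: "\<forall>a::'a. \<exists>x. a*x*a = a" using assms by (simp add: regular_semigroup_def)
  have P1: "\<forall>e \<in> (Eset :: 'a set). Gamma_obj (Rcls e) = Hfun (rcone e)"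
    using Gamma_obj_eq[OF reg] by blast
  have P2: "\<forall>(e, u, f) \<in> (Rtrip :: ('a \<times> 'a \<times> 'a) set). Gamma_mor (lmor e u f) = Gamma_formula e u f"
    using Gamma_mor_eq[OF reg] by blast
  have P3: "\<forall>c \<in> (Robj :: 'a set set). Gamma_obj c \<in> NLobj"
  proof
    fix c :: "'a set" assume "c \<in> Robj"
    then obtain e where e: "e \<in> Eset" "c = Rcls e" using Robj_E by blast
    show "Gamma_obj c \<in> NLobj" unfolding NLobj_def is_normal_cone_def
      using e Gamma_obj_eq[OF reg e(1)] rcone_normal[OF e(1)] by blast
  qed
  have P4: "\<forall>c \<in> (Robj :: 'a set set). \<forall>d \<in> Robj. \<forall>m \<in> Rhom c d.
        Gamma_mor m \<in> NLhom (Gamma_obj c) (Gamma_obj d)"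
  proof (intro ballI)
    fix c d :: "'a set" and m assume c: "c \<in> Robj" and d: "d \<in> Robj" and m: "m \<in> Rhom c d"
    obtain e where e: "e \<in> Eset" "c = Rcls e" using Robj_E c by blast
    obtain f where f: "f \<in> Eset" "d = Rcls f" using Robj_E d by blast
    obtain u where u: "f*u = u" "u*e = u" "m = lmor e u f" using m e f Rhom_repr[OF e(1) f(1)] by blast
    have t: "(e,u,f) \<in> Rtrip" using e f u by (simp add: Rtrip_iff)
    show "Gamma_mor m \<in> NLhom (Gamma_obj c) (Gamma_obj d)"
      using GF_NLhom[OF reg t] Gamma_mor_eq[OF reg t] Gamma_obj_eq[OF reg e(1)] Gamma_obj_eq[OF reg f(1)] u(3) e f
      by simp
  qed
  have P5: "\<forall>e \<in> (Eset :: 'a set). Gamma_mor (lmor e e e) = NLid (Gamma_obj (Rcls e))"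
  proof
    fix e :: 'a assume e: "e \<in> Eset"
    have t: "(e,e,e) \<in> Rtrip" using e by (simp add: Rtrip_iff E_iff)
    show "Gamma_mor (lmor e e e) = NLid (Gamma_obj (Rcls e))"
      using Gamma_mor_eq[OF reg t] GF_id[OF reg e] Gamma_obj_eq[OF reg e] by simp
  qed
  have P6: "\<forall>c \<in> (Robj :: 'a set set). \<forall>d \<in> Robj. \<forall>d' \<in> Robj. \<forall>m \<in> Rhom c d. \<forall>n \<in> Rhom d d'.
        Gamma_mor (Rcomp m n) = NLcomp (Gamma_obj c) (Gamma_mor m) (Gamma_mor n)"
  proof (intro ballI)
    fix c d d' :: "'a set" and m n assume c: "c \<in> Robj" and d: "d \<in> Robj" and d': "d' \<in> Robj"
      and m: "m \<in> Rhom c d" and n: "n \<in> Rhom d d'"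
    obtain e where e: "e \<in> Eset" "c = Rcls e" using Robj_E c by blast
    obtain f where f: "f \<in> Eset" "d = Rcls f" using Robj_E d by blast
    obtain g where g: "g \<in> Eset" "d' = Rcls g" using Robj_E d' by blast
    obtain u where u: "f*u = u" "u*e = u" "m = lmor e u f" using m e f Rhom_repr[OF e(1) f(1)] by blast
    obtain v where v: "g*v = v" "v*f = v" "n = lmor f v g" using n f g Rhom_repr[OF f(1) g(1)] by blast
    have t: "(e,u,f) \<in> Rtrip" "(f,v,g) \<in> Rtrip" using e f g u v by (simp_all add: Rtrip_iff)
    have t2: "(e, v*u, g) \<in> Rtrip" using t by (auto simp: Rtrip_iff) (metis mult.assoc)+
    show "Gamma_mor (Rcomp m n) = NLcomp (Gamma_obj c) (Gamma_mor m) (Gamma_mor n)"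
      using Rcomp_lmor[OF t] Gamma_mor_eq[OF reg t2] GF_comp[OF reg t] Gamma_mor_eq[OF reg t(1)]
        Gamma_mor_eq[OF reg t(2)] Gamma_obj_eq[OF reg e(1)] u(3) v(3) e(2) by simp
  qed
  have P7: "\<forall>c \<in> (Robj :: 'a set set). \<forall>d \<in> Robj. Rsub c d \<longrightarrow>
        NLis_incl (Gamma_obj c) (Gamma_obj d) (Gamma_mor (Rincl c d))"
  proof (intro ballI impI)
    fix c d :: "'a set" assume c: "c \<in> Robj" and d: "d \<in> Robj" and s: "Rsub c d"
    obtain f where f: "f \<in> Eset" "d = Rcls f" using Robj_E d by blast
    obtain k where k: "k \<in> Eset" "c = Rcls k" "f*k = k" using s f Rsub_repr[OF f(1)] by blast
    have t: "(k,k,f) \<in> Rtrip" using k f by (simp add: Rtrip_iff E_iff)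
    show "NLis_incl (Gamma_obj c) (Gamma_obj d) (Gamma_mor (Rincl c d))"
      using GF_incl[OF reg k(1) f(1) k(3)] Rincl_eq[OF k(1) f(1) k(3)] Gamma_mor_eq[OF reg t]
        Gamma_obj_eq[OF reg k(1)] Gamma_obj_eq[OF reg f(1)] k(2) f(2) by simp
  qed
  have P8: "\<forall>c \<in> (Robj :: 'a set set). \<forall>d \<in> Robj.
        bij_betw Gamma_mor (Rhom c d) (NLhom (Gamma_obj c) (Gamma_obj d))"
  proof (intro ballI)
    fix c d :: "'a set" assume c: "c \<in> Robj" and d: "d \<in> Robj"
    obtain e where e: "e \<in> Eset" "c = Rcls e" using Robj_E c by blast
    obtain f where f: "f \<in> Eset" "d = Rcls f" using Robj_E d by blast
    show "bij_betw Gamma_mor (Rhom c d) (NLhom (Gamma_obj c) (Gamma_obj d))"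
      using FF[OF reg e(1) f(1)] Gamma_obj_eq[OF reg e(1)] Gamma_obj_eq[OF reg f(1)] e(2) f(2) by simp
  qed
  have P9: "\<forall>c \<in> (Robj :: 'a set set).
        bij_betw Gamma_obj {d \<in> Robj. Rsub d c} {G \<in> NLobj. NLsub G (Gamma_obj c)}"
  proof
    fix c :: "'a set" assume c: "c \<in> Robj"
    obtain e where e: "e \<in> Eset" "c = Rcls e" using Robj_E c by blast
    show "bij_betw Gamma_obj {d \<in> Robj. Rsub d c} {G \<in> NLobj. NLsub G (Gamma_obj c)}"
      using OB[OF reg e(1)] e(2) by simp
  qed
  show ?thesis using P1 P2 P3 P4 P5 P6 P7 P8 P9 by blast
qed


end
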